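(* Let $0<p<1$, $p'=p/(p-1)$ (so $p'<0$), $q>0$, and let $f$ be a measurable function on a measure space with non-increasing rearrangement $f^*$. Define $$\|f\|^*_{p,q}=\Big(\int_0^\infty \big(f^*(t)t^{1/p}\big)^q\frac{dt}{t}\Big)^{1/q},\qquad \|f\|^{**}_{p,q}=\Big(\int_0^\infty\Big(\int_t^\infty f^*(u)du\Big)^q t^{-q/p'}\frac{dt}{t}\Big)^{1/q}.$$ If $q\ge1$, then $$\big(q\,B(q,-q/p')\big)^{1/q}\|f\|^*_{p,q}\le\|f\|^{**}_{p,q}\le -p'\,\|f\|^*_{p,q},$$ and if $0<q\le1$ both inequalities hold in the reversed direction. Both constants $(q\,B(q,-q/p'))^{1/q}$ and $-p'$ are sharp for all $q>0$.
   Context: $f^*$ is the non-increasing rearrangement of $f$. $B(u,v)=\int_0^1 t^{u-1}(1-t)^{v-1}dt$ is the Euler beta function. *)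

theory Defs
  imports "HOL-Analysis.Analysis"
begin

text \<open>Real power of an extended non-negative real, for positive exponents
  (infinity stays infinity).\<close>
definition enn_powr :: "ennreal \<Rightarrow> real \<Rightarrow> ennreal" where
  "enn_powr x a = (if x = \<infinity> then \<infinity> else ennreal (enn2real x powr a))"

definition rearr :: "'a measure \<Rightarrow> ('a \<Rightarrow> real) \<Rightarrow> real \<Rightarrow> ennreal" where
  "rearr M f t = Inf {s::ennreal. emeasure M {x \<in> space M. s < ennreal \<bar>f x\<bar>} \<le> ennreal t}"

definition pconj :: "real \<Rightarrow> real" where
  "pconj p = p / (p - 1)"

definition lorentz_star :: "'a measure \<Rightarrow> ('a \<Rightarrow> real) \<Rightarrow> real \<Rightarrow> real \<Rightarrow> ennreal" where
  "lorentz_star M f p q =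
     enn_powr (\<integral>\<^sup>+ t \<in> {0<..}. enn_powr (rearr M f t * ennreal (t powr (1/p))) q
                                 * ennreal (1/t) \<partial>lborel) (1/q)"

definition lorentz_sstar :: "'a measure \<Rightarrow> ('a \<Rightarrow> real) \<Rightarrow> real \<Rightarrow> real \<Rightarrow> ennreal" where
  "lorentz_sstar M f p q =
     enn_powr (\<integral>\<^sup>+ t \<in> {0<..}. enn_powr (\<integral>\<^sup>+ u \<in> {t<..}. rearr M f u \<partial>lborel) q
                                 * ennreal (t powr (- q / pconj p)) * ennreal (1/t) \<partial>lborel) (1/q)"

end

theory Submission
  imports Defs
begin


lemma enn_powr_0[simp]: "enn_powr 0 a = 0"
  by (simp add: enn_powr_def)

lemma enn_powr_top[simp]: "enn_powr \<infinity> a = \<infinity>"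
  by (simp add: enn_powr_def)

lemma enn_powr_top'[simp]: "enn_powr top a = top"
  by (simp add: enn_powr_def)

lemma enn_powr_ennreal[simp]: "0 \<le> x \<Longrightarrow> enn_powr (ennreal x) a = ennreal (x powr a)"
  by (simp add: enn_powr_def)

lemma enn_powr_1[simp]: "enn_powr x 1 = x"
  by (cases x rule: ennreal_cases) auto

lemma enn_powr_mono: assumes "0 < a" "x \<le> y" shows "enn_powr x a \<le> enn_powr y a"
proof (cases y rule: ennreal_cases)
  case (real r)
  then obtain s where "x = ennreal s" "0 \<le> s" "s \<le> r" using assms
    by (metis ennreal_cases ennreal_le_iff ennreal_neq_top top.extremum_uniqueI)
  then show ?thesis using real assms by (auto intro!: ennreal_leI powr_mono2)
qed simp

lemma enn_powr_le_iff: assumes "0 < a" shows "enn_powr x a \<le> enn_powr y a \<longleftrightarrow> x \<le> y"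
proof
  assume h: "enn_powr x a \<le> enn_powr y a"
  show "x \<le> y"
  proof (cases y rule: ennreal_cases)
    case (real r)
    then obtain s where xs: "x = ennreal s" "0 \<le> s" using h
      by (cases x rule: ennreal_cases) (auto simp: top_unique)
    then have "s powr a \<le> r powr a" using h real by (auto simp: ennreal_le_iff2)
    then have "s \<le> r" using assms xs real
      by (metis not_le powr_less_mono2)
    then show ?thesis using xs real by auto
  qed simp
qed (rule enn_powr_mono[OF assms])

lemma enn_powr_less_iff: assumes "0 < a" shows "enn_powr x a < enn_powr y a \<longleftrightarrow> x < y"
  using enn_powr_le_iff[OF assms, of y x] by (simp add: not_le[symmetric])

lemma enn_powr_eq_iff: assumes "0 < a" shows "enn_powr x a = enn_powr y a \<longleftrightarrow> x = y"
  using enn_powr_le_iff[OF assms, of x y] enn_powr_le_iff[OF assms, of y x] by (auto intro: antisym)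

lemma enn_powr_eq_0_iff[simp]: assumes "0 < a" shows "enn_powr x a = 0 \<longleftrightarrow> x = 0"
  using enn_powr_eq_iff[OF assms, of x 0] by simp

lemma enn_powr_eq_top_iff[simp]: "enn_powr x a = \<infinity> \<longleftrightarrow> x = \<infinity>"
  by (cases x rule: ennreal_cases) (auto simp: enn_powr_def)

lemma enn_powr_mult: assumes "0 < a" shows "enn_powr (x * y) a = enn_powr x a * enn_powr y a"
proof (cases "x = 0 \<or> y = 0")
  case True then show ?thesis using assms by auto
next
  case False
  show ?thesis
  proof (cases x rule: ennreal_cases)
    case (real r)
    show ?thesis
    proof (cases y rule: ennreal_cases)
      case (real s)
      have "x * y = ennreal (r * s)" using real \<open>x = ennreal r\<close> \<open>0 \<le> r\<close> by (simp add: ennreal_mult)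
      then have "enn_powr (x * y) a = ennreal (r powr a * s powr a)"
        using real \<open>0 \<le> r\<close> by (simp add: powr_mult)
      then show ?thesis using real \<open>x = ennreal r\<close> \<open>0 \<le> r\<close>
        by (simp add: ennreal_mult)
    next
      case top
      have "r > 0" using False \<open>x = ennreal r\<close> \<open>0 \<le> r\<close> by auto
      then have "ennreal (r powr a) \<noteq> 0" by simp
      then show ?thesis using top \<open>x = ennreal r\<close> \<open>0 \<le> r\<close> False
        by (simp add: ennreal_mult_top)
    qed
  next
    case top
    have "enn_powr y a \<noteq> 0" using False assms by simp
    then show ?thesis using False top by (simp add: ennreal_top_mult)
  qed
qed

lemma enn_powr_powr: assumes "0 < a" "0 < b" shows "enn_powr (enn_powr x a) b = enn_powr x (a * b)"
  by (cases x rule: ennreal_cases) (auto simp: powr_powr)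

lemma enn_powr_measurable[measurable]:
  assumes "f \<in> borel_measurable M" shows "(\<lambda>x. enn_powr (f x) a) \<in> borel_measurable M"
  unfolding enn_powr_def using assms by measurable

lemma enn_powr_ennreal_mult: assumes "0 < a" "0 \<le> k"
  shows "enn_powr (ennreal k * x) a = ennreal (k powr a) * enn_powr x a"
  using enn_powr_mult[OF assms(1)] assms by simp

lemma enn_powr_pos: "0 < a \<Longrightarrow> x > 0 \<Longrightarrow> enn_powr x a > 0"
  using enn_powr_eq_0_iff by (metis not_gr_zero)



lemma antimono_borel_measurable:
  fixes g :: "real \<Rightarrow> 'b::{linorder_topology, second_countable_topology}"
  assumes "antimono g"
  shows "g \<in> borel_measurable borel"
proof (rule borel_measurableI_greater)
  fix y
  define D where "D = {x. y < g x}"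
  have down: "x \<in> D" if "z \<in> D" "x \<le> z" for x z
  proof -
    have "g z \<le> g x" using that(2) assms unfolding antimono_def by blast
    then show ?thesis using that(1) unfolding D_def by (auto intro: less_le_trans)
  qed
  have "D \<in> sets borel"
  proof (cases "D = {}")
    case True then show ?thesis by simp
  next
    case ne: False
    show ?thesis
    proof (cases "bdd_above D")
      case False
      have "D = UNIV"
      proof (intro set_eqI iffI)
        fix x
        from False obtain z where "z \<in> D" "x < z" unfolding bdd_above_def by (meson not_le)
        then show "x \<in> D" using down by auto
      qed simp
      then show ?thesis by simp
    next
      case True
      define s where "s = Sup D"
      have "{..<s} \<subseteq> D"
      proof
        fix x assume "x \<in> {..<s}"
        then obtain z where "z \<in> D" "x < z" using less_cSup_iff[OF ne True] s_def by auto
        then show "x \<in> D" using down by auto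
      qed
      moreover have "D \<subseteq> {..s}" using True s_def by (auto intro: cSup_upper)
      ultimately have "D = {..<s} \<union> (D \<inter> {s})" by auto
      moreover have "D \<inter> {s} \<in> sets borel"
      proof -
        have "D \<inter> {s} = {} \<or> D \<inter> {s} = {s}" by auto
        moreover have "{s} \<in> sets borel" by (intro borel_closed closed_singleton)
        ultimately show ?thesis by (metis sets.empty_sets)
      qed
      ultimately show ?thesis by (metis sets.Un atMost_borel lessThan_borel)
    qed
  qed
  then show "{x \<in> space borel. y < g x} \<in> sets borel" by (simp add: D_def)
qed

lemma young_enn:
  assumes "0 < \<theta>" "\<theta> < 1"
  shows "enn_powr x \<theta> * enn_powr y (1-\<theta>) \<le> ennreal \<theta> * x + ennreal (1-\<theta>) * y"
proof (cases "x = \<infinity> \<or> y = \<infinity>")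
  case True
  have t1: "ennreal \<theta> \<noteq> 0" "ennreal (1-\<theta>) \<noteq> 0" using assms by auto
  have eqn: "ennreal \<theta> * x + ennreal (1-\<theta>) * y = \<infinity>"
  proof (cases "x = \<infinity>")
    case True then show ?thesis using t1 by (simp add: ennreal_mult_top)
  next
    case False then have "y = \<infinity>" using \<open>x = \<infinity> \<or> y = \<infinity>\<close> by simp
    then show ?thesis using t1 by (simp add: ennreal_mult_top)
  qed
  show ?thesis unfolding eqn by simp
next
  case False
  then obtain r s where rs: "x = ennreal r" "y = ennreal s" "0 \<le> r" "0 \<le> s"
    by (cases x rule: ennreal_cases; cases y rule: ennreal_cases) auto
  have "r powr \<theta> * s powr (1-\<theta>) \<le> \<theta> * r + (1-\<theta>) * s"
  proof (cases "r = 0 \<or> s = 0")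
    case True then show ?thesis using assms rs by auto
  next
    case False then show ?thesis using Youngs_inequality_0[of \<theta> "1-\<theta>" r s] assms rs by auto
  qed
  then show ?thesis using rs assms
    by (simp add: ennreal_mult[symmetric] ennreal_plus[symmetric] del: ennreal_plus)
qed

lemma holder_enn:
  assumes th: "0 < \<theta>" "\<theta> < 1"
    and X[measurable]: "X \<in> borel_measurable M" and Y[measurable]: "Y \<in> borel_measurable M"
  shows "(\<integral>\<^sup>+x. enn_powr (X x) \<theta> * enn_powr (Y x) (1-\<theta>) \<partial>M)
          \<le> enn_powr (\<integral>\<^sup>+x. X x \<partial>M) \<theta> * enn_powr (\<integral>\<^sup>+x. Y x \<partial>M) (1-\<theta>)"
proof -
  define A where "A = (\<integral>\<^sup>+x. X x \<partial>M)"
  define B where "B = (\<integral>\<^sup>+x. Y x \<partial>M)"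
  have th': "0 < 1 - \<theta>" using th by simp
  show ?thesis
  proof (cases "A = 0 \<or> B = 0")
    case True
    then have "AE x in M. X x = 0 \<or> Y x = 0"
      unfolding A_def B_def by (auto simp: nn_integral_0_iff_AE)
    then have "(\<integral>\<^sup>+x. enn_powr (X x) \<theta> * enn_powr (Y x) (1-\<theta>) \<partial>M) = 0"
      by (subst nn_integral_0_iff_AE) (auto elim!: eventually_mono)
    then show ?thesis by (simp add: A_def B_def)
  next
    case nz: False
    show ?thesis
    proof (cases "A = \<infinity> \<or> B = \<infinity>")
      case True
      have p1: "enn_powr A \<theta> \<noteq> 0" "enn_powr B (1-\<theta>) \<noteq> 0" using nz th th' by auto
      have "enn_powr A \<theta> * enn_powr B (1-\<theta>) = \<infinity>"
      proof (cases "A = \<infinity>")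
        case True then show ?thesis using p1 by (simp add: ennreal_top_mult)
      next
        case False then have "B = \<infinity>" using \<open>A = \<infinity> \<or> B = \<infinity>\<close> by simp
        then show ?thesis using p1 by (simp add: ennreal_mult_top)
      qed
      then show ?thesis by (simp add: A_def B_def)
    next
      case False
      then obtain \<alpha> \<beta> where ab: "A = ennreal \<alpha>" "B = ennreal \<beta>" "0 < \<alpha>" "0 < \<beta>"
      proof -
        obtain \<alpha> where a1: "A = ennreal \<alpha>" "0 \<le> \<alpha>" using False by (cases A rule: ennreal_cases) auto
        obtain \<beta> where b1: "B = ennreal \<beta>" "0 \<le> \<beta>" using False by (cases B rule: ennreal_cases) auto
        have "\<alpha> \<noteq> 0" "\<beta> \<noteq> 0" using nz a1 b1 by auto
        then show ?thesis using that a1 b1 by auto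
      qed
      define C where "C = \<alpha> powr \<theta> * \<beta> powr (1-\<theta>)"
      have C0: "0 \<le> C" by (simp add: C_def)
      have pt: "enn_powr (X x) \<theta> * enn_powr (Y x) (1-\<theta>) \<le>
          ennreal C * (ennreal (\<theta>/\<alpha>) * X x + ennreal ((1-\<theta>)/\<beta>) * Y x)" for x
      proof -
        have eX: "enn_powr (X x) \<theta> = ennreal (\<alpha> powr \<theta>) * enn_powr (ennreal (1/\<alpha>) * X x) \<theta>"
          using ab th by (simp add: enn_powr_ennreal_mult mult.assoc[symmetric] ennreal_mult[symmetric]
              powr_mult[symmetric] del: ennreal_mult)
        have eY: "enn_powr (Y x) (1-\<theta>) = ennreal (\<beta> powr (1-\<theta>)) * enn_powr (ennreal (1/\<beta>) * Y x) (1-\<theta>)"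
          using ab th' by (simp add: enn_powr_ennreal_mult mult.assoc[symmetric] ennreal_mult[symmetric]
              powr_mult[symmetric] del: ennreal_mult)
        have "enn_powr (X x) \<theta> * enn_powr (Y x) (1-\<theta>) = ennreal C *
            (enn_powr (ennreal (1/\<alpha>) * X x) \<theta> * enn_powr (ennreal (1/\<beta>) * Y x) (1-\<theta>))"
          unfolding eX eY C_def using ab by (simp add: ennreal_mult mult_ac)
        also have "\<dots> \<le> ennreal C * (ennreal \<theta> * (ennreal (1/\<alpha>) * X x) + ennreal (1-\<theta>) * (ennreal (1/\<beta>) * Y x))"
          by (intro mult_left_mono young_enn th) simp
        also have "\<dots> = ennreal C * (ennreal (\<theta>/\<alpha>) * X x + ennreal ((1-\<theta>)/\<beta>) * Y x)"
          using ab th by (simp add: mult.assoc[symmetric] ennreal_mult[symmetric] del: ennreal_mult)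
        finally show ?thesis .
      qed
      have "(\<integral>\<^sup>+x. enn_powr (X x) \<theta> * enn_powr (Y x) (1-\<theta>) \<partial>M) \<le>
          (\<integral>\<^sup>+x. ennreal C * (ennreal (\<theta>/\<alpha>) * X x + ennreal ((1-\<theta>)/\<beta>) * Y x) \<partial>M)"
        by (intro nn_integral_mono pt)
      also have "\<dots> = ennreal C * (ennreal (\<theta>/\<alpha>) * A + ennreal ((1-\<theta>)/\<beta>) * B)"
        unfolding A_def B_def by (simp add: nn_integral_cmult nn_integral_add)
      also have "\<dots> = ennreal C"
        using ab th by (simp add: ennreal_mult[symmetric] ennreal_plus[symmetric] del: ennreal_plus)
      also have "\<dots> = enn_powr A \<theta> * enn_powr B (1-\<theta>)"
        using ab by (simp add: C_def ennreal_mult)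
      finally show ?thesis by (simp add: A_def B_def)
    qed
  qed
qed



lemma countable_negligible: "countable C \<Longrightarrow> negligible (C :: 'a::euclidean_space set)"
proof -
  assume "countable C"
  then have "negligible (\<Union>x\<in>C. {x})"
    by (intro negligible_countable_Union) auto
  then show ?thesis by simp
qed

lemma nn_integral_indicator_AE_eq:
  fixes f :: "real \<Rightarrow> ennreal"
  assumes "\<And>x. x \<noteq> p1 \<Longrightarrow> x \<noteq> p2 \<Longrightarrow> indicator A x = (indicator B x :: ennreal)"
  shows "(\<integral>\<^sup>+x. f x * indicator A x \<partial>lborel) = (\<integral>\<^sup>+x. f x * indicator B x \<partial>lborel)"
proof (rule nn_integral_cong_AE)
  have "AE x in lborel. x \<noteq> p1" "AE x in lborel. x \<noteq> p2" by (rule AE_lborel_singleton)+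
  then show "AE x in lborel. f x * indicator A x = f x * indicator B x"
    by eventually_elim (simp add: assms)
qed

lemma nn_integral_powr_0:
  fixes e c :: real
  assumes "e > -1" "c \<ge> 0"
  shows "(\<integral>\<^sup>+x. ennreal (x powr e) * indicator {0<..<c} x \<partial>lborel) = ennreal (c powr (e+1) / (e+1))"
proof -
  have "(\<integral>\<^sup>+x. ennreal (x powr e) * indicator {0..c} x \<partial>lborel) = ennreal (c powr (e+1) / (e+1))"
    by (rule nn_integral_has_integral_lebesgue'[OF _ has_integral_powr_from_0[OF assms]]) simp
  moreover have "(\<integral>\<^sup>+x. ennreal (x powr e) * indicator {0<..<c} x \<partial>lborel) =
      (\<integral>\<^sup>+x. ennreal (x powr e) * indicator {0..c} x \<partial>lborel)"
    by (rule nn_integral_indicator_AE_eq[of 0 c]) (auto simp: indicator_def)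
  ultimately show ?thesis by simp
qed

lemma nn_integral_powr_inf:
  fixes e a :: real
  assumes "e < -1" "a > 0"
  shows "(\<integral>\<^sup>+x. ennreal (x powr e) * indicator {a<..} x \<partial>lborel) = ennreal (-(a powr (e+1)) / (e+1))"
proof -
  have "(\<integral>\<^sup>+x. ennreal (x powr e) * indicator {a..} x \<partial>lborel) = ennreal (-(a powr (e+1)) / (e+1))"
    by (rule nn_integral_has_integral_lebesgue'[OF _ has_integral_powr_to_inf[OF assms]]) simp
  moreover have "(\<integral>\<^sup>+x. ennreal (x powr e) * indicator {a<..} x \<partial>lborel) =
      (\<integral>\<^sup>+x. ennreal (x powr e) * indicator {a..} x \<partial>lborel)"
    by (rule nn_integral_indicator_AE_eq[of a a]) (auto simp: indicator_def)
  ultimately show ?thesis by simp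
qed

lemma nn_integral_Beta:
  fixes x y u :: real
  assumes "x > 0" "y > 0" "u > 0"
  shows "(\<integral>\<^sup>+t. ennreal (t powr (x-1) * (u-t) powr (y-1)) * indicator {0<..<u} t \<partial>lborel)
          = ennreal (u powr (x+y-1) * Beta x y)"
proof -
  have B: "(\<integral>\<^sup>+s. ennreal (s powr (x-1) * (1-s) powr (y-1)) * indicator {0..1} s \<partial>lborel) = ennreal (Beta x y)"
    by (rule nn_integral_has_integral_lebesgue'[OF _ has_integral_Beta_real[OF assms(1,2)]]) simp
  have B': "(\<integral>\<^sup>+s. ennreal (s powr (x-1) * (1-s) powr (y-1)) * indicator {0<..<1} s \<partial>lborel) = ennreal (Beta x y)"
    unfolding B[symmetric] by (rule nn_integral_indicator_AE_eq[of 0 1]) (auto simp: indicator_def)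
  have "(\<integral>\<^sup>+t. ennreal (t powr (x-1) * (u-t) powr (y-1)) * indicator {0<..<u} t \<partial>lborel)
      = ennreal \<bar>u\<bar> * (\<integral>\<^sup>+s. ennreal ((0 + u * s) powr (x-1) * (u-(0 + u * s)) powr (y-1)) * indicator {0<..<u} (0 + u * s) \<partial>lborel)"
    by (rule nn_integral_real_affine) (use assms in auto)
  also have "(\<lambda>s. ennreal ((0 + u * s) powr (x-1) * (u-(0 + u * s)) powr (y-1)) * indicator {0<..<u} (0 + u * s))
      = (\<lambda>s. ennreal (u powr (x+y-2)) * (ennreal (s powr (x-1) * (1-s) powr (y-1)) * indicator {0<..<1} s))"
  proof
    fix s
    show "ennreal ((0 + u * s) powr (x-1) * (u-(0 + u * s)) powr (y-1)) * indicator {0<..<u} (0 + u * s)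
      = ennreal (u powr (x+y-2)) * (ennreal (s powr (x-1) * (1-s) powr (y-1)) * indicator {0<..<1} s)"
    proof (cases "0 < s \<and> s < 1")
      case True
      have "(u * s) powr (x-1) * (u - u * s) powr (y-1) = u powr (x+y-2) * (s powr (x-1) * (1-s) powr (y-1))"
      proof -
        have "u - u * s = u * (1-s)" by (simp add: algebra_simps)
        then have "(u * s) powr (x-1) * (u - u * s) powr (y-1) = u powr (x-1) * s powr (x-1) * (u powr (y-1) * (1-s) powr (y-1))"
          using True assms by (simp add: powr_mult)
        also have "\<dots> = (u powr (x-1) * u powr (y-1)) * (s powr (x-1) * (1-s) powr (y-1))" by (simp add: mult_ac)
        also have "u powr (x-1) * u powr (y-1) = u powr (x+y-2)" using assms by (simp add: powr_add[symmetric])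
        finally show ?thesis .
      qed
      moreover have "0 < u * s \<and> u * s < u" using True assms by (simp add: mult_less_cancel_left1)
      ultimately show ?thesis using True assms by (simp add: ennreal_mult[symmetric] del: ennreal_mult)
    next
      case False
      have "\<not> (0 < u * s \<and> u * s < u)" using False assms
        by (auto simp: zero_less_mult_iff mult_less_cancel_left1)
      then show ?thesis using False by simp
    qed
  qed
  also have "(\<integral>\<^sup>+s. ennreal (u powr (x+y-2)) * (ennreal (s powr (x-1) * (1-s) powr (y-1)) * indicator {0<..<1} s) \<partial>lborel)
      = ennreal (u powr (x+y-2)) * ennreal (Beta x y)"
    by (subst nn_integral_cmult) (auto simp: B')
  also have "ennreal \<bar>u\<bar> * (ennreal (u powr (x+y-2)) * ennreal (Beta x y)) = ennreal (u powr (x+y-1) * Beta x y)"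
  proof -
    have "u * u powr (x+y-2) = u powr (x+y-1)" using assms by (simp add: powr_add[symmetric] powr_mult_base)
    moreover have "Beta x y \<ge> 0" using assms by (simp add: Beta_def Gamma_real_pos less_imp_le)
    ultimately show ?thesis using assms by (simp add: ennreal_mult[symmetric] mult.assoc[symmetric] del: ennreal_mult)
  qed
  finally show ?thesis .
qed



locale chainsetup =
  fixes h :: "real \<Rightarrow> real" and b :: real
  assumes anti: "antimono h" and nn: "\<And>x. 0 \<le> h x" and bpos: "0 < b"
begin

definition F where "F x = integral {0..x} h"
definition I where "I = integral {0..b} h"
definition Dc where "Dc = {x\<in>{0..b}. \<not> continuous (at x within {0..b}) h}"
definition S where "S = {x\<in>{0<..<b}. 0 < h x} - Dc"

lemma hle: "x \<le> y \<Longrightarrow> h y \<le> h x"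
  using anti unfolding antimono_def by blast

lemma h_meas[measurable]: "h \<in> borel_measurable borel"
  by (rule antimono_borel_measurable[OF anti])

lemma integrable_h: "h integrable_on {u..v}"
proof -
  have "mono_on {u..v} (\<lambda>x. - h x)" by (auto simp: mono_on_def hle)
  then have "(\<lambda>x. - h x) integrable_on {u..v}" by (rule integrable_on_mono_on)
  then show ?thesis using integrable_neg by fastforce
qed

lemma Dc_countable: "countable Dc"
proof -
  have "mono_on {0..b} (\<lambda>x. - h x)" by (auto simp: mono_on_def hle)
  from mono_on_ctble_discont[OF this]
  have "countable {x\<in>{0..b}. \<not> continuous (at x within {0..b}) (\<lambda>x. - h x)}" .
  moreover have "continuous (at x within {0..b}) (\<lambda>x. - h x) \<longleftrightarrow> continuous (at x within {0..b}) h" for x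
    using continuous_minus[of "at x within {0..b}" h] continuous_minus[of "at x within {0..b}" "\<lambda>x. - h x"]
    by auto
  ultimately show ?thesis unfolding Dc_def by simp
qed

lemma S_sub: "S \<subseteq> {0<..<b}" unfolding S_def by auto

lemma S_lebesgue: "S \<in> sets lebesgue"
proof -
  have "{x\<in>space borel. 0 < h x} \<in> sets borel" using h_meas by (simp add: borel_measurable_iff_greater)
  then have "{0<..<b} \<inter> {x\<in>space borel. 0 < h x} \<in> sets borel" by auto
  then have "{x\<in>{0<..<b}. 0 < h x} \<in> sets borel" by (simp add: Int_def)
  moreover have "sets borel \<subseteq> sets lebesgue" by force
  ultimately have "{x\<in>{0<..<b}. 0 < h x} \<in> sets lebesgue" by blast
  moreover have "Dc \<in> sets lebesgue" using Dc_countable by (intro negligible_imp_sets countable_negligible)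
  ultimately show ?thesis unfolding S_def by auto
qed

lemma F_cont: "continuous_on {0..b} F"
  unfolding F_def by (rule indefinite_integral_continuous_1[OF integrable_h])

lemma F_split: "0 \<le> x \<Longrightarrow> x \<le> y \<Longrightarrow> F y = F x + integral {x..y} h"
  unfolding F_def using Henstock_Kurzweil_Integration.integral_combine[where a=0 and c=x and b=y and f=h] integrable_h by simp

lemma int_ge: assumes "x \<le> y" shows "integral {x..y} h \<ge> (y - x) * h y"
proof -
  have "integral {x..y} (\<lambda>_. h y) \<le> integral {x..y} h"
    by (rule integral_le) (auto intro: integrable_h hle)
  then show ?thesis using assms by simp
qed

lemma int_nonneg: "integral {x..y} h \<ge> 0"
  by (rule integral_nonneg[OF integrable_h nn])

lemma F_ge: "0 \<le> x \<Longrightarrow> x * h x \<le> F x"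
  using int_ge[of 0 x] unfolding F_def by simp

lemma F_0: "F 0 = 0" unfolding F_def by simp
lemma F_b: "F b = I" unfolding F_def I_def by simp

lemma F_mono: "0 \<le> x \<Longrightarrow> x \<le> y \<Longrightarrow> F x \<le> F y"
proof -
  assume "0 \<le> x" "x \<le> y"
  then have "F y = F x + integral {x..y} h" by (rule F_split)
  then show ?thesis using int_nonneg[of x y] by simp
qed

lemma F_zero: assumes "0 \<le> x" "x \<le> b" "h x = 0" shows "F x = I"
proof -
  have "integral {x..b} h \<le> integral {x..b} (\<lambda>_. 0)"
  proof (rule integral_le)
    fix t assume "t \<in> {x..b}"
    then have "h t \<le> h x" by (intro hle) auto
    then show "h t \<le> 0" using assms by simp
  qed (auto intro: integrable_h)
  then have "integral {x..b} h = 0" using int_nonneg[of x b] by simp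
  then show ?thesis using F_split[of x b] assms F_b by simp
qed

lemma deriv: assumes "x \<in> S" shows "(F has_field_derivative h x) (at x within S)"
proof -
  have x: "x \<in> {0..b} - {}" "continuous (at x within ({0..b} - {})) h"
    using assms unfolding S_def Dc_def by auto
  have "(F has_vector_derivative h x) (at x within ({0..b} - {}))"
    unfolding F_def by (rule integral_has_vector_derivative_continuous_at[OF integrable_h x(1) _ x(2)]) simp
  then have "(F has_vector_derivative h x) (at x within S)"
    by (rule has_vector_derivative_within_subset) (use S_sub in auto)
  then show ?thesis by (simp add: has_real_derivative_iff_has_vector_derivative)
qed

lemma inj: "inj_on F S"
proof -
  have "F x < F y" if "x \<in> S" "y \<in> S" "x < y" for x y
  proof -
    have "0 < h y" "0 < x" using that unfolding S_def by auto
    then have "0 < (y - x) * h y" using that by simp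
    also have "\<dots> \<le> integral {x..y} h" using int_ge that by simp
    finally show ?thesis using F_split[of x y] \<open>0 < x\<close> that by simp
  qed
  then show ?thesis unfolding inj_on_def by (metis linorder_neq_iff order.irrefl)
qed

lemma image_sub: "F ` S \<subseteq> {0<..I}"
proof
  fix y assume "y \<in> F ` S"
  then obtain x where x: "x \<in> S" "y = F x" by auto
  then have "0 < x" "x < b" "0 < h x" unfolding S_def by auto
  then have "0 < x * h x" by simp
  also have "\<dots> \<le> F x" using F_ge \<open>0 < x\<close> by simp
  finally have "0 < y" using x by simp
  moreover have "y \<le> I" using F_mono[of x b] \<open>0 < x\<close> \<open>x < b\<close> x F_b by simp
  ultimately show "y \<in> {0<..I}" by simp
qed

lemma image_sup: "{0<..<I} - F ` S \<subseteq> F ` Dc"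
proof
  fix y assume y: "y \<in> {0<..<I} - F ` S"
  obtain x where x: "0 \<le> x" "x \<le> b" "F x = y"
    using IVT'[of F 0 y b] F_cont F_0 F_b y bpos by auto
  have "x \<noteq> 0" using x y F_0 by auto
  moreover have "x \<noteq> b" using x y F_b by auto
  moreover have "h x \<noteq> 0" using F_zero[of x] x y by auto
  ultimately have "x \<in> {0<..<b}" "0 < h x" using x nn[of x] by auto
  then have "x \<in> Dc" using y x unfolding S_def by auto
  then show "y \<in> F ` Dc" using x by auto
qed

lemma I_nonneg: "0 \<le> I" unfolding I_def by (rule int_nonneg)

lemma chain:
  assumes q: "0 < q"
  shows "(\<integral>\<^sup>+x. ennreal (h x * (q * F x powr (q-1))) * indicator S x \<partial>lborel) = ennreal (I powr q)"
proof -
  define \<phi> where "\<phi> = (\<lambda>s::real. q * s powr (q-1))"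
  have "((\<lambda>s. s powr (q-1)) has_integral (I powr (q-1+1) / (q-1+1))) {0..I}"
    by (rule has_integral_powr_from_0) (use q I_nonneg in auto)
  then have "((\<lambda>s. q * s powr (q-1)) has_integral (q * (I powr q / q))) {0..I}"
    by (intro has_integral_mult_right) simp
  then have i1: "(\<phi> has_integral I powr q) {0..I}" using q by (simp add: \<phi>_def)
  have neg: "negligible (({0..I} - F ` S) \<union> (F ` S - {0..I}))"
  proof -
    have "({0..I} - F ` S) \<union> (F ` S - {0..I}) \<subseteq> insert 0 (insert I (F ` Dc))"
    proof
      fix x assume x: "x \<in> ({0..I} - F ` S) \<union> (F ` S - {0..I})"
      show "x \<in> insert 0 (insert I (F ` Dc))"
      proof (cases "x = 0 \<or> x = I")
        case False
        then have "x \<in> {0<..<I} - F ` S" using x image_sub by auto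
        then show ?thesis using image_sup by auto
      qed auto
    qed
    moreover have "negligible (insert 0 (insert I (F ` Dc)))"
      using Dc_countable by (simp add: countable_negligible)
    ultimately show ?thesis by (meson negligible_subset)
  qed
  have i2: "(\<phi> has_integral I powr q) (F ` S)"
  proof -
    have n1: "negligible {x \<in> {0..I} - F ` S. \<phi> x \<noteq> 0}" by (rule negligible_subset[OF neg]) auto
    have n2: "negligible {x \<in> F ` S - {0..I}. \<phi> x \<noteq> 0}" by (rule negligible_subset[OF neg]) auto
    show ?thesis using has_integral_spike_set_eq[OF n1 n2] i1 by simp
  qed
  have nn\<phi>: "x \<in> F ` S \<Longrightarrow> 0 \<le> \<phi> x" for x using q by (simp add: \<phi>_def)
  have a2: "\<phi> absolutely_integrable_on F ` S"
    using i2 nn\<phi> by (intro nonnegative_absolutely_integrable_1) (auto simp: has_integral_integrable)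
  have "(\<lambda>x. \<bar>h x\<bar> *\<^sub>R \<phi> (F x)) absolutely_integrable_on S \<and> integral S (\<lambda>x. \<bar>h x\<bar> *\<^sub>R \<phi> (F x)) = I powr q"
    using has_absolute_integral_change_of_variables_real[OF S_lebesgue deriv inj, of \<phi> "I powr q"]
      a2 i2 by (simp add: integral_unique)
  then have "((\<lambda>x. h x * \<phi> (F x)) has_integral I powr q) S"
    using nn by (auto simp: absolutely_integrable_on_def dest: integrable_integral)
  then have "(\<integral>\<^sup>+x. ennreal (h x * \<phi> (F x)) * indicator S x \<partial>lborel) = ennreal (I powr q)"
    by (rule nn_integral_has_integral_lebesgue'[rotated]) (use nn q in \<open>simp add: \<phi>_def\<close>)
  then show ?thesis by (simp add: \<phi>_def)
qed

end



lemma powr_rearr: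
  fixes x h q :: real assumes "0 < x" "0 < h"
  shows "x powr (q-1) * h powr q = h * (x*h) powr (q-1)"
proof -
  have "(x*h) powr (q-1) = x powr (q-1) * h powr (q-1)" using assms by (simp add: powr_mult)
  moreover have "h * h powr (q-1) = h powr q" using assms by (simp add: powr_mult_base)
  ultimately show ?thesis by (simp add: mult_ac)
qed

context chainsetup
begin

lemma AE_eq_S:
  assumes q: "0 < q"
  shows "(\<integral>\<^sup>+x. ennreal (q * x powr (q-1) * h x powr q) * indicator {0<..<b} x \<partial>lborel)
       = (\<integral>\<^sup>+x. ennreal (q * x powr (q-1) * h x powr q) * indicator S x \<partial>lborel)"
proof (rule nn_integral_cong_AE)
  have "AE x in lborel. x \<notin> Dc" by (rule AE_not_in[OF countable_imp_null_set_lborel[OF Dc_countable]])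
  then show "AE x in lborel. ennreal (q * x powr (q-1) * h x powr q) * indicator {0<..<b} x
       = ennreal (q * x powr (q-1) * h x powr q) * indicator S x"
  proof eventually_elim
    case (elim x)
    show ?case
    proof (cases "x \<in> {0<..<b} \<and> x \<notin> S")
      case True
      then have "h x = 0" using elim nn[of x] unfolding S_def by auto
      then show ?thesis using q by simp
    next
      case False
      then show ?thesis using S_sub by (auto simp: indicator_def)
    qed
  qed
qed

lemma P_ge1:
  assumes q: "1 \<le> q"
  shows "(\<integral>\<^sup>+x. ennreal (q * x powr (q-1) * h x powr q) * indicator {0<..<b} x \<partial>lborel) \<le> ennreal (I powr q)"
proof -
  have "(\<integral>\<^sup>+x. ennreal (q * x powr (q-1) * h x powr q) * indicator {0<..<b} x \<partial>lborel)
       = (\<integral>\<^sup>+x. ennreal (q * x powr (q-1) * h x powr q) * indicator S x \<partial>lborel)"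
    using q by (intro AE_eq_S) simp
  also have "\<dots> \<le> (\<integral>\<^sup>+x. ennreal (h x * (q * F x powr (q-1))) * indicator S x \<partial>lborel)"
  proof (intro nn_integral_mono)
    fix x
    show "ennreal (q * x powr (q-1) * h x powr q) * indicator S x \<le> ennreal (h x * (q * F x powr (q-1))) * indicator S x"
    proof (cases "x \<in> S")
      case True
      then have x: "0 < x" "0 < h x" unfolding S_def by auto
      have "(x * h x) powr (q-1) \<le> F x powr (q-1)"
        using x q F_ge[of x] by (intro powr_mono2) auto
      then have "q * x powr (q-1) * h x powr q \<le> h x * (q * F x powr (q-1))"
        using powr_rearr[OF x, of q] x q by (simp add: mult_ac mult_left_mono)
      then show ?thesis using True by (simp add: ennreal_leI)
    qed simp
  qed
  also have "\<dots> = ennreal (I powr q)" using q by (intro chain) simp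
  finally show ?thesis .
qed

lemma P_le1:
  assumes q: "0 < q" "q \<le> 1"
  shows "ennreal (I powr q) \<le> (\<integral>\<^sup>+x. ennreal (q * x powr (q-1) * h x powr q) * indicator {0<..<b} x \<partial>lborel)"
proof -
  have "ennreal (I powr q) = (\<integral>\<^sup>+x. ennreal (h x * (q * F x powr (q-1))) * indicator S x \<partial>lborel)"
    using q by (intro chain[symmetric]) simp
  also have "\<dots> \<le> (\<integral>\<^sup>+x. ennreal (q * x powr (q-1) * h x powr q) * indicator S x \<partial>lborel)"
  proof (intro nn_integral_mono)
    fix x
    show "ennreal (h x * (q * F x powr (q-1))) * indicator S x \<le> ennreal (q * x powr (q-1) * h x powr q) * indicator S x"
    proof (cases "x \<in> S")
      case True
      then have x: "0 < x" "0 < h x" unfolding S_def by auto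
      have "F x powr (q-1) \<le> (x * h x) powr (q-1)"
        using x q F_ge[of x] by (intro powr_mono2') auto
      then have "h x * (q * F x powr (q-1)) \<le> q * x powr (q-1) * h x powr q"
        using powr_rearr[OF x, of q] x q by (simp add: mult_ac mult_left_mono)
      then show ?thesis using True by (simp add: ennreal_leI)
    qed simp
  qed
  also have "\<dots> = (\<integral>\<^sup>+x. ennreal (q * x powr (q-1) * h x powr q) * indicator {0<..<b} x \<partial>lborel)"
    using q by (intro AE_eq_S[symmetric]) simp
  finally show ?thesis .
qed

lemma I_nn_integral: "ennreal I = (\<integral>\<^sup>+x. ennreal (h x) * indicator {0<..<b} x \<partial>lborel)"
proof -
  have "(h has_integral I) {0..b}" unfolding I_def using integrable_h by (rule integrable_integral)
  then have "(\<integral>\<^sup>+x. ennreal (h x) * indicator {0..b} x \<partial>lborel) = ennreal I"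
    by (rule nn_integral_has_integral_lebesgue'[rotated]) (use nn in auto)
  moreover have "(\<integral>\<^sup>+x. ennreal (h x) * indicator {0<..<b} x \<partial>lborel) = (\<integral>\<^sup>+x. ennreal (h x) * indicator {0..b} x \<partial>lborel)"
    by (rule nn_integral_indicator_AE_eq[of 0 b]) (auto simp: indicator_def)
  ultimately show ?thesis by simp
qed

end

lemma nn_integral_SUP_Ioi:
  fixes f :: "real \<Rightarrow> ennreal"
  assumes [measurable]: "f \<in> borel_measurable borel"
  shows "(\<integral>\<^sup>+u. f u * indicator {t<..} u \<partial>lborel) = (SUP n. \<integral>\<^sup>+u. f u * indicator {t<..<t + real (Suc n)} u \<partial>lborel)"
proof -
  have inc: "incseq (\<lambda>n u. f u * indicator {t<..<t + real (Suc n)} u)"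
    by (intro incseq_SucI le_funI mult_left_mono) (auto simp: indicator_def)
  have "(SUP n. f u * indicator {t<..<t + real (Suc n)} u) = f u * indicator {t<..} u" for u
  proof (cases "t < u")
    case True
    obtain n :: nat where "u - t < real n" using reals_Archimedean2 by blast
    then have n: "u < t + real (Suc n)" by simp
    show ?thesis
    proof (rule antisym)
      show "(SUP n. f u * indicator {t<..<t + real (Suc n)} u) \<le> f u * indicator {t<..} u"
        by (intro SUP_least mult_left_mono) (auto simp: indicator_def)
      show "f u * indicator {t<..} u \<le> (SUP n. f u * indicator {t<..<t + real (Suc n)} u)"
        by (rule SUP_upper2[of n]) (use True n in auto)
    qed
  qed simp
  then have "(\<integral>\<^sup>+u. f u * indicator {t<..} u \<partial>lborel) = (\<integral>\<^sup>+u. (SUP n. f u * indicator {t<..<t + real (Suc n)} u) \<partial>lborel)"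
    by simp
  also have "\<dots> = (SUP n. \<integral>\<^sup>+u. f u * indicator {t<..<t + real (Suc n)} u \<partial>lborel)"
    by (rule nn_integral_monotone_convergence_SUP[OF inc]) simp
  finally show ?thesis .
qed



lemma nn_integral_shift:
  fixes f :: "real \<Rightarrow> ennreal"
  assumes [measurable]: "f \<in> borel_measurable borel"
  shows "(\<integral>\<^sup>+u. f u \<partial>lborel) = (\<integral>\<^sup>+x. f (t + x) \<partial>lborel)"
  using nn_integral_real_affine[OF assms, of 1 t] by simp

locale gsetup =
  fixes g :: "real \<Rightarrow> ennreal" and t :: real
  assumes anti: "antimono g" and fin: "\<And>u. 0 < u \<Longrightarrow> g u \<noteq> \<infinity>" and tpos: "0 < t"
begin

definition h where "h x = enn2real (g (t + max 0 x))"

lemma g_meas[measurable]: "g \<in> borel_measurable borel"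
  by (rule antimono_borel_measurable[OF anti])

lemma h_anti: "antimono h"
proof (rule antimonoI)
  fix x y :: real assume "x \<le> y"
  then have "g (t + max 0 y) \<le> g (t + max 0 x)" using anti unfolding antimono_def by auto
  moreover have "g (t + max 0 x) \<noteq> \<infinity>" using fin tpos by (simp add: add_pos_nonneg)
  ultimately show "h y \<le> h x" unfolding h_def by (simp add: enn2real_mono top.not_eq_extremum)
qed

lemma cs: "0 < b \<Longrightarrow> chainsetup h b"
  by unfold_locales (auto simp: h_anti h_def)

lemma g_eq: "0 < x \<Longrightarrow> g (t + x) = ennreal (h x)"
  using fin[of "t+x"] tpos unfolding h_def by (simp add: ennreal_enn2real_if)

lemma E1: assumes "0 < b"
  shows "ennreal (chainsetup.I h b) = (\<integral>\<^sup>+u. g u * indicator {t<..<t+b} u \<partial>lborel)"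
proof -
  interpret chainsetup h b by (rule cs[OF assms])
  have "(\<integral>\<^sup>+u. g u * indicator {t<..<t+b} u \<partial>lborel) = (\<integral>\<^sup>+x. g (t + x) * indicator {t<..<t+b} (t + x) \<partial>lborel)"
    by (rule nn_integral_shift) simp
  also have "\<dots> = (\<integral>\<^sup>+x. ennreal (h x) * indicator {0<..<b} x \<partial>lborel)"
    by (intro nn_integral_cong) (auto simp: indicator_def g_eq)
  finally show ?thesis using I_nn_integral by simp
qed

lemma E2: assumes "0 < b" "0 < q"
  shows "(\<integral>\<^sup>+x. ennreal (q * x powr (q-1) * h x powr q) * indicator {0<..<b} x \<partial>lborel)
    = (\<integral>\<^sup>+u. ennreal (q * (u-t) powr (q-1)) * enn_powr (g u) q * indicator {t<..<t+b} u \<partial>lborel)"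
proof -
  have "(\<integral>\<^sup>+u. ennreal (q * (u-t) powr (q-1)) * enn_powr (g u) q * indicator {t<..<t+b} u \<partial>lborel)
     = (\<integral>\<^sup>+x. ennreal (q * (t+x-t) powr (q-1)) * enn_powr (g (t+x)) q * indicator {t<..<t+b} (t+x) \<partial>lborel)"
    by (rule nn_integral_shift) simp
  also have "\<dots> = (\<integral>\<^sup>+x. ennreal (q * x powr (q-1) * h x powr q) * indicator {0<..<b} x \<partial>lborel)"
  proof (intro nn_integral_cong)
    fix x
    show "ennreal (q * (t+x-t) powr (q-1)) * enn_powr (g (t+x)) q * indicator {t<..<t+b} (t+x)
      = ennreal (q * x powr (q-1) * h x powr q) * indicator {0<..<b} x"
    proof (cases "0 < x \<and> x < b")
      case True
      have "0 \<le> h x" unfolding h_def by simp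
      then show ?thesis using True g_eq[of x] assms by (simp add: ennreal_mult)
    qed (auto simp: indicator_def)
  qed
  finally show ?thesis by simp
qed

definition H where "H = (\<integral>\<^sup>+u. g u * indicator {t<..} u \<partial>lborel)"
definition R where "R q = (\<integral>\<^sup>+u. ennreal (q * (u-t) powr (q-1)) * enn_powr (g u) q * indicator {t<..} u \<partial>lborel)"

lemma H_SUP: "H = (SUP n. \<integral>\<^sup>+u. g u * indicator {t<..<t + real (Suc n)} u \<partial>lborel)"
  unfolding H_def by (rule nn_integral_SUP_Ioi) simp

lemma R_SUP: "R q = (SUP n. \<integral>\<^sup>+u. (ennreal (q * (u-t) powr (q-1)) * enn_powr (g u) q) * indicator {t<..<t + real (Suc n)} u \<partial>lborel)"
  unfolding R_def by (rule nn_integral_SUP_Ioi) simp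

lemma Ib_le_H: "(\<integral>\<^sup>+u. g u * indicator {t<..<t + b} u \<partial>lborel) \<le> H"
  unfolding H_def by (intro nn_integral_mono mult_left_mono) (auto simp: indicator_def)

lemma P_g_ge1:
  assumes q: "1 \<le> q"
  shows "R q \<le> enn_powr H q"
  unfolding R_SUP
proof (rule SUP_least)
  fix n
  define b where "b = real (Suc n)"
  have b: "0 < b" by (simp add: b_def)
  interpret chainsetup h b by (rule cs[OF b])
  have "(\<integral>\<^sup>+u. (ennreal (q * (u-t) powr (q-1)) * enn_powr (g u) q) * indicator {t<..<t + b} u \<partial>lborel)
      = (\<integral>\<^sup>+x. ennreal (q * x powr (q-1) * h x powr q) * indicator {0<..<b} x \<partial>lborel)"
    using E2[OF b, of q] q by simp
  also have "\<dots> \<le> ennreal (I powr q)" by (rule P_ge1[OF q])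
  also have "\<dots> = enn_powr (ennreal I) q" using I_nonneg by simp
  also have "\<dots> \<le> enn_powr H q"
    using q Ib_le_H[of b] E1[OF b] by (intro enn_powr_mono) auto
  finally show "(\<integral>\<^sup>+u. (ennreal (q * (u-t) powr (q-1)) * enn_powr (g u) q) * indicator {t<..<t + real (Suc n)} u \<partial>lborel)
       \<le> enn_powr H q" by (simp add: b_def)
qed

lemma P_g_le1:
  assumes q: "0 < q" "q \<le> 1"
  shows "enn_powr H q \<le> R q"
proof -
  have "H \<le> enn_powr (R q) (1/q)"
    unfolding H_SUP
  proof (rule SUP_least)
    fix n
    define b where "b = real (Suc n)"
    have b: "0 < b" by (simp add: b_def)
    interpret chainsetup h b by (rule cs[OF b])
    have "enn_powr (ennreal I) q = ennreal (I powr q)" using I_nonneg by simp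
    also have "\<dots> \<le> (\<integral>\<^sup>+x. ennreal (q * x powr (q-1) * h x powr q) * indicator {0<..<b} x \<partial>lborel)"
      by (rule P_le1[OF q])
    also have "\<dots> = (\<integral>\<^sup>+u. ennreal (q * (u-t) powr (q-1)) * enn_powr (g u) q * indicator {t<..<t+b} u \<partial>lborel)"
      using E2[OF b q(1)] .
    also have "\<dots> \<le> R q" unfolding R_def by (intro nn_integral_mono mult_left_mono) (auto simp: indicator_def)
    also have "\<dots> = enn_powr (enn_powr (R q) (1/q)) q" using q by (simp add: enn_powr_powr)
    finally have "ennreal I \<le> enn_powr (R q) (1/q)" using q by (simp add: enn_powr_le_iff)
    then show "(\<integral>\<^sup>+u. g u * indicator {t<..<t + real (Suc n)} u \<partial>lborel) \<le> enn_powr (R q) (1/q)"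
      using E1[OF b] by (simp add: b_def)
  qed
  then have "enn_powr H q \<le> enn_powr (enn_powr (R q) (1/q)) q" using q by (intro enn_powr_mono) auto
  also have "\<dots> = R q" using q by (simp add: enn_powr_powr)
  finally show ?thesis .
qed

end



lemma tri_swap:
  fixes f :: "real \<Rightarrow> real \<Rightarrow> ennreal"
  assumes [measurable]: "case_prod f \<in> borel_measurable (lborel \<Otimes>\<^sub>M lborel)"
  shows "(\<integral>\<^sup>+t. (\<integral>\<^sup>+u. f t u * indicator {t<..} u \<partial>lborel) * indicator {0<..} t \<partial>lborel)
       = (\<integral>\<^sup>+u. (\<integral>\<^sup>+t. f t u * indicator {0<..<u} t \<partial>lborel) * indicator {0<..} u \<partial>lborel)"
proof -
  have i1: "(\<lambda>x::real\<times>real. indicator {fst x<..} (snd x) :: ennreal) = (\<lambda>x. if fst x < snd x then 1 else 0)"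
    by (auto simp: indicator_def fun_eq_iff)
  have i2: "(\<lambda>x::real\<times>real. indicator {0<..} (fst x) :: ennreal) = (\<lambda>x. if 0 < fst x then 1 else 0)"
    by (auto simp: indicator_def fun_eq_iff)
  have [measurable]: "(\<lambda>x::real\<times>real. indicator {fst x<..} (snd x) :: ennreal) \<in> borel_measurable (lborel \<Otimes>\<^sub>M lborel)"
    unfolding i1 by measurable
  have [measurable]: "(\<lambda>x::real\<times>real. indicator {0<..} (fst x) :: ennreal) \<in> borel_measurable (lborel \<Otimes>\<^sub>M lborel)"
    unfolding i2 by measurable
  have "(\<integral>\<^sup>+t. (\<integral>\<^sup>+u. f t u * indicator {t<..} u \<partial>lborel) * indicator {0<..} t \<partial>lborel)
      = (\<integral>\<^sup>+t. (\<integral>\<^sup>+u. f t u * indicator {t<..} u * indicator {0<..} t \<partial>lborel) \<partial>lborel)"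
    by (subst nn_integral_multc) auto
  also have "\<dots> = (\<integral>\<^sup>+u. (\<integral>\<^sup>+t. f t u * indicator {t<..} u * indicator {0<..} t \<partial>lborel) \<partial>lborel)"
    by (rule lborel_pair.Fubini'[symmetric]) measurable
  also have "\<dots> = (\<integral>\<^sup>+u. (\<integral>\<^sup>+t. f t u * indicator {0<..<u} t * indicator {0<..} u \<partial>lborel) \<partial>lborel)"
    by (intro nn_integral_cong) (auto simp: indicator_def)
  also have "\<dots> = (\<integral>\<^sup>+u. (\<integral>\<^sup>+t. f t u * indicator {0<..<u} t \<partial>lborel) * indicator {0<..} u \<partial>lborel)"
    by (subst nn_integral_multc) auto
  finally show ?thesis .
qed

locale core =
  fixes g :: "real \<Rightarrow> ennreal" and q a :: real
  assumes anti: "antimono g" and qpos: "0 < q" and agt: "1 < a"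
begin

definition c where "c = a - 1"
lemma cpos: "0 < c" using agt by (simp add: c_def)

lemma g_meas[measurable]: "g \<in> borel_measurable borel"
  by (rule antimono_borel_measurable[OF anti])

definition H where "H t = (\<integral>\<^sup>+u. g u * indicator {t<..} u \<partial>lborel)"
definition G where "G t = (\<integral>\<^sup>+u. enn_powr (g u) q * ennreal (u powr (a*(q-1))) * indicator {t<..} u \<partial>lborel)"
definition W where "W t = t powr (-c) / c"
definition SS where "SS = (\<integral>\<^sup>+u. enn_powr (g u) q * ennreal (u powr (q*a - 1)) * indicator {0<..} u \<partial>lborel)"
definition TT where "TT = (\<integral>\<^sup>+t. enn_powr (H t) q * ennreal (t powr (q*c - 1)) * indicator {0<..} t \<partial>lborel)"

lemma W_int: "0 < t \<Longrightarrow> (\<integral>\<^sup>+u. ennreal (u powr (-a)) * indicator {t<..} u \<partial>lborel) = ennreal (W t)"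
proof -
  assume t: "0 < t"
  have "-(t powr (-a+1))/(-a+1) = t powr (-(a-1)) / (a-1)" using agt by (simp add: field_simps)
  then show ?thesis using nn_integral_powr_inf[of "-a" t] agt t unfolding W_def c_def by simp
qed

lemma W_pos: "0 < t \<Longrightarrow> 0 < W t" using cpos by (simp add: W_def)

lemma HH_ge1:
  assumes q1: "1 \<le> q" and t: "0 < t"
  shows "enn_powr (H t) q \<le> G t * ennreal (W t powr (q-1))"
proof (cases "q = 1")
  case True
  have "G t = H t" unfolding G_def H_def using True t
    by (intro nn_integral_cong) (auto simp: indicator_def)
  then show ?thesis using True W_pos[OF t] by simp
next
  case False
  then have q1': "1 < q" using q1 by simp
  define \<theta> where "\<theta> = 1/q"
  have th: "0 < \<theta>" "\<theta> < 1" using q1' by (auto simp: \<theta>_def)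
  define X where "X u = enn_powr (g u) q * ennreal (u powr (a*(q-1))) * indicator {t<..} u" for u
  define Y where "Y u = ennreal (u powr (-a)) * indicator {t<..} u" for u
  have XY: "enn_powr (X u) \<theta> * enn_powr (Y u) (1-\<theta>) = g u * indicator {t<..} u" for u
  proof (cases "t < u")
    case True
    then have u: "0 < u" using t by simp
    have "enn_powr (X u) \<theta> = g u * ennreal (u powr (a*(q-1)*\<theta>))"
      using True th q1' unfolding X_def
      by (simp add: enn_powr_mult enn_powr_powr \<theta>_def powr_powr)
    moreover have "enn_powr (Y u) (1-\<theta>) = ennreal (u powr (-a*(1-\<theta>)))"
      using True th unfolding Y_def by (simp add: powr_powr)
    moreover have "u powr (a*(q-1)*\<theta>) * u powr (-a*(1-\<theta>)) = 1"
    proof -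
      have s0: "a*(q-1)*\<theta> + (-a*(1-\<theta>)) = 0" using q1' by (simp add: \<theta>_def field_simps)
      have "u powr (a*(q-1)*\<theta>) * u powr (-a*(1-\<theta>)) = u powr (a*(q-1)*\<theta> + (-a*(1-\<theta>)))"
        by (rule powr_add[symmetric])
      also have "\<dots> = u powr 0" unfolding s0 ..
      finally show ?thesis using u by simp
    qed
    ultimately show ?thesis using True
      by (simp add: mult.assoc ennreal_mult[symmetric] del: ennreal_mult)
  next
    case False
    then show ?thesis using th by (simp add: X_def Y_def)
  qed
  have "H t = (\<integral>\<^sup>+u. enn_powr (X u) \<theta> * enn_powr (Y u) (1-\<theta>) \<partial>lborel)"
    unfolding H_def XY ..
  also have "\<dots> \<le> enn_powr (\<integral>\<^sup>+u. X u \<partial>lborel) \<theta> * enn_powr (\<integral>\<^sup>+u. Y u \<partial>lborel) (1-\<theta>)"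
    by (rule holder_enn[OF th]) (simp_all add: X_def Y_def)
  also have "(\<integral>\<^sup>+u. X u \<partial>lborel) = G t" unfolding X_def G_def ..
  also have "(\<integral>\<^sup>+u. Y u \<partial>lborel) = ennreal (W t)" unfolding Y_def using W_int[OF t] .
  finally have "enn_powr (H t) q \<le> enn_powr (enn_powr (G t) \<theta> * enn_powr (ennreal (W t)) (1-\<theta>)) q"
    using q1' by (intro enn_powr_mono) auto
  also have "\<dots> = G t * ennreal (W t powr (q-1))"
  proof -
    have e: "(q*q - q)/q = q - 1" using q1' by (simp add: field_simps)
    show ?thesis using th q1' W_pos[OF t]
      by (simp add: enn_powr_mult enn_powr_powr \<theta>_def powr_powr field_simps e)
  qed
  finally show ?thesis .
qed

lemma HH_le1:
  assumes q1: "q \<le> 1" and t: "0 < t"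
  shows "G t * ennreal (W t powr (q-1)) \<le> enn_powr (H t) q"
proof (cases "q = 1")
  case True
  have "G t = H t" unfolding G_def H_def using True t
    by (intro nn_integral_cong) (auto simp: indicator_def)
  then show ?thesis using True W_pos[OF t] by simp
next
  case False
  then have q1': "q < 1" using q1 by simp
  have th: "0 < q" "q < 1" using q1' qpos by auto
  define X where "X u = g u * indicator {t<..} u" for u
  define Y where "Y u = ennreal (u powr (-a)) * indicator {t<..} u" for u
  have XY: "enn_powr (X u) q * enn_powr (Y u) (1-q) = enn_powr (g u) q * ennreal (u powr (a*(q-1))) * indicator {t<..} u" for u
  proof (cases "t < u")
    case True
    have "-a*(1-q) = a*(q-1)" by (simp add: algebra_simps)
    then show ?thesis using True th unfolding X_def Y_def by (simp add: powr_powr)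
  next
    case False
    then show ?thesis using th by (simp add: X_def Y_def)
  qed
  have "G t = (\<integral>\<^sup>+u. enn_powr (X u) q * enn_powr (Y u) (1-q) \<partial>lborel)"
    unfolding G_def XY ..
  also have "\<dots> \<le> enn_powr (\<integral>\<^sup>+u. X u \<partial>lborel) q * enn_powr (\<integral>\<^sup>+u. Y u \<partial>lborel) (1-q)"
    by (rule holder_enn[OF th]) (simp_all add: X_def Y_def)
  also have "(\<integral>\<^sup>+u. X u \<partial>lborel) = H t" unfolding X_def H_def ..
  also have "(\<integral>\<^sup>+u. Y u \<partial>lborel) = ennreal (W t)" unfolding Y_def using W_int[OF t] .
  finally have "G t * ennreal (W t powr (q-1)) \<le> enn_powr (H t) q * enn_powr (ennreal (W t)) (1-q) * ennreal (W t powr (q-1))"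
    by (intro mult_right_mono) auto
  also have "\<dots> = enn_powr (H t) q"
  proof -
    have "W t powr (1-q) * W t powr (q-1) = 1" using W_pos[OF t] by (simp add: powr_add[symmetric])
    then show ?thesis using W_pos[OF t] by (simp add: mult.assoc ennreal_mult[symmetric] del: ennreal_mult)
  qed
  finally show ?thesis .
qed

lemma tonelli_HH:
  "(\<integral>\<^sup>+t. G t * ennreal (W t powr (q-1)) * ennreal (t powr (q*c - 1)) * indicator {0<..} t \<partial>lborel)
     = ennreal (c powr (-q)) * SS"
proof -
  have e1: "G t * ennreal (W t powr (q-1)) * ennreal (t powr (q*c - 1)) * indicator {0<..} t
      = (\<integral>\<^sup>+u. (ennreal (c powr (1-q) * t powr (c-1)) * (enn_powr (g u) q * ennreal (u powr (a*(q-1))))) * indicator {t<..} u \<partial>lborel) * indicator {0<..} t" for t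
  proof (cases "0 < t")
    case True
    have "W t powr (q-1) * t powr (q*c - 1) = c powr (1-q) * t powr (c-1)"
    proof -
      have "W t powr (q-1) = (t powr (-c)) powr (q-1) / c powr (q-1)"
        using True cpos unfolding W_def by (simp add: powr_divide less_imp_le)
      also have "(t powr (-c)) powr (q-1) = t powr (-c*(q-1))" by (simp add: powr_powr)
      also have "1 / c powr (q-1) = c powr (1-q)"
        using cpos powr_minus_divide[of c "q-1"] by simp
      then have "t powr (-c*(q-1)) / c powr (q-1) = t powr (-c*(q-1)) * c powr (1-q)"
        by (metis divide_inverse inverse_eq_divide)
      finally have "W t powr (q-1) = t powr (-c*(q-1)) * c powr (1-q)" .
      then have "W t powr (q-1) * t powr (q*c - 1) = c powr (1-q) * (t powr (-c*(q-1)) * t powr (q*c - 1))"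
        by simp
      also have "t powr (-c*(q-1)) * t powr (q*c - 1) = t powr (c-1)"
        using True by (simp add: powr_add[symmetric] algebra_simps)
      finally show ?thesis .
    qed
    moreover have "G t * ennreal (W t powr (q-1)) * ennreal (t powr (q*c - 1))
        = G t * ennreal (W t powr (q-1) * t powr (q*c - 1))"
      by (simp add: ennreal_mult mult.assoc)
    ultimately have "G t * ennreal (W t powr (q-1)) * ennreal (t powr (q*c - 1))
        = ennreal (c powr (1-q) * t powr (c-1)) * G t"
      by (simp add: mult.commute)
    also have "\<dots> = (\<integral>\<^sup>+u. ennreal (c powr (1-q) * t powr (c-1)) * (enn_powr (g u) q * ennreal (u powr (a*(q-1))) * indicator {t<..} u) \<partial>lborel)"
      unfolding G_def by (subst nn_integral_cmult) auto
    finally show ?thesis using True by (simp add: mult.assoc)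
  qed simp
  have "(\<integral>\<^sup>+t. G t * ennreal (W t powr (q-1)) * ennreal (t powr (q*c - 1)) * indicator {0<..} t \<partial>lborel)
    = (\<integral>\<^sup>+u. (\<integral>\<^sup>+t. (ennreal (c powr (1-q) * t powr (c-1)) * (enn_powr (g u) q * ennreal (u powr (a*(q-1))))) * indicator {0<..<u} t \<partial>lborel) * indicator {0<..} u \<partial>lborel)"
    unfolding e1 by (rule tri_swap) measurable
  also have "\<dots> = (\<integral>\<^sup>+u. ennreal (c powr (-q)) * (enn_powr (g u) q * ennreal (u powr (q*a - 1)) * indicator {0<..} u) \<partial>lborel)"
  proof (intro nn_integral_cong)
    fix u
    show "(\<integral>\<^sup>+t. (ennreal (c powr (1-q) * t powr (c-1)) * (enn_powr (g u) q * ennreal (u powr (a*(q-1))))) * indicator {0<..<u} t \<partial>lborel) * indicator {0<..} u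
       = ennreal (c powr (-q)) * (enn_powr (g u) q * ennreal (u powr (q*a - 1)) * indicator {0<..} u)"
    proof (cases "0 < u")
      case True
      have "(\<integral>\<^sup>+t. (ennreal (c powr (1-q) * t powr (c-1)) * (enn_powr (g u) q * ennreal (u powr (a*(q-1))))) * indicator {0<..<u} t \<partial>lborel)
          = (\<integral>\<^sup>+t. ennreal (t powr (c-1)) * indicator {0<..<u} t * (ennreal (c powr (1-q)) * (enn_powr (g u) q * ennreal (u powr (a*(q-1))))) \<partial>lborel)"
        by (intro nn_integral_cong) (simp add: ennreal_mult mult_ac)
      also have "\<dots> = (\<integral>\<^sup>+t. ennreal (t powr (c-1)) * indicator {0<..<u} t \<partial>lborel) * (ennreal (c powr (1-q)) * (enn_powr (g u) q * ennreal (u powr (a*(q-1)))))"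
        by (rule nn_integral_multc) simp
      also have "(\<integral>\<^sup>+t. ennreal (t powr (c-1)) * indicator {0<..<u} t \<partial>lborel) = ennreal (u powr c / c)"
        using nn_integral_powr_0[of "c-1" u] True cpos by simp
      also have "ennreal (u powr c / c) * (ennreal (c powr (1-q)) * (enn_powr (g u) q * ennreal (u powr (a*(q-1)))))
          = ennreal (c powr (-q)) * (enn_powr (g u) q * ennreal (u powr (q*a - 1)))"
      proof -
        have "u powr c / c * c powr (1-q) * u powr (a*(q-1)) = c powr (-q) * u powr (q*a - 1)"
        proof -
          have "c powr (1-q) / c = c powr (-q)" using cpos by (simp add: powr_diff powr_minus_divide)
          moreover have "u powr c * u powr (a*(q-1)) = u powr (q*a - 1)"
            using True by (simp add: powr_add[symmetric] c_def algebra_simps)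
          ultimately show ?thesis by (metis (no_types, lifting) mult.commute times_divide_eq_left mult.left_commute)
        qed
        moreover have "ennreal A * (ennreal B * (X * ennreal C)) = ennreal (A * B * C) * X"
          if "0 \<le> A" "0 \<le> B" "0 \<le> C" for A B C X
          using that by (simp add: ennreal_mult mult_ac)
        moreover have "0 \<le> u powr c / c" using cpos by simp
        moreover have "ennreal (c powr (-q)) * (enn_powr (g u) q * ennreal (u powr (q*a - 1)))
            = ennreal (c powr (-q) * u powr (q*a - 1)) * enn_powr (g u) q"
          by (simp add: ennreal_mult mult_ac)
        ultimately show ?thesis by (metis powr_ge_zero)
      qed
      finally show ?thesis using True by simp
    qed simp
  qed
  also have "\<dots> = ennreal (c powr (-q)) * SS" unfolding SS_def by (subst nn_integral_cmult) auto
  finally show ?thesis .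
qed

end



context core
begin

definition RR where "RR t = (\<integral>\<^sup>+u. ennreal (q * (u-t) powr (q-1)) * enn_powr (g u) q * indicator {t<..} u \<partial>lborel)"

lemma Beta_pos': "0 < x \<Longrightarrow> 0 < y \<Longrightarrow> 0 < Beta x (y::real)"
  by (simp add: Beta_def Gamma_real_pos)

lemma tonelli_Beta:
  "(\<integral>\<^sup>+t. RR t * ennreal (t powr (q*c - 1)) * indicator {0<..} t \<partial>lborel)
     = ennreal (q * Beta q (q*c)) * SS"
proof -
  have qc: "0 < q*c" using qpos cpos by simp
  have e1: "RR t * ennreal (t powr (q*c - 1)) * indicator {0<..} t
      = (\<integral>\<^sup>+u. (ennreal (t powr (q*c - 1)) * (ennreal (q * (u-t) powr (q-1)) * enn_powr (g u) q)) * indicator {t<..} u \<partial>lborel) * indicator {0<..} t" for t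
  proof -
    have "RR t * ennreal (t powr (q*c - 1)) = ennreal (t powr (q*c - 1)) * RR t" by (simp add: mult.commute)
    also have "\<dots> = (\<integral>\<^sup>+u. ennreal (t powr (q*c - 1)) * (ennreal (q * (u-t) powr (q-1)) * enn_powr (g u) q * indicator {t<..} u) \<partial>lborel)"
      unfolding RR_def by (subst nn_integral_cmult) auto
    finally show ?thesis by (simp add: mult.assoc)
  qed
  have "(\<integral>\<^sup>+t. RR t * ennreal (t powr (q*c - 1)) * indicator {0<..} t \<partial>lborel)
    = (\<integral>\<^sup>+u. (\<integral>\<^sup>+t. (ennreal (t powr (q*c - 1)) * (ennreal (q * (u-t) powr (q-1)) * enn_powr (g u) q)) * indicator {0<..<u} t \<partial>lborel) * indicator {0<..} u \<partial>lborel)"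
    unfolding e1 by (rule tri_swap) measurable
  also have "\<dots> = (\<integral>\<^sup>+u. ennreal (q * Beta q (q*c)) * (enn_powr (g u) q * ennreal (u powr (q*a - 1)) * indicator {0<..} u) \<partial>lborel)"
  proof (intro nn_integral_cong)
    fix u
    show "(\<integral>\<^sup>+t. (ennreal (t powr (q*c - 1)) * (ennreal (q * (u-t) powr (q-1)) * enn_powr (g u) q)) * indicator {0<..<u} t \<partial>lborel) * indicator {0<..} u
       = ennreal (q * Beta q (q*c)) * (enn_powr (g u) q * ennreal (u powr (q*a - 1)) * indicator {0<..} u)"
    proof (cases "0 < u")
      case True
      have "(\<integral>\<^sup>+t. (ennreal (t powr (q*c - 1)) * (ennreal (q * (u-t) powr (q-1)) * enn_powr (g u) q)) * indicator {0<..<u} t \<partial>lborel)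
          = (\<integral>\<^sup>+t. ennreal (t powr (q*c - 1) * (u-t) powr (q-1)) * indicator {0<..<u} t * (ennreal q * enn_powr (g u) q) \<partial>lborel)"
        using qpos by (intro nn_integral_cong) (simp add: ennreal_mult mult_ac)
      also have "\<dots> = (\<integral>\<^sup>+t. ennreal (t powr (q*c - 1) * (u-t) powr (q-1)) * indicator {0<..<u} t \<partial>lborel) * (ennreal q * enn_powr (g u) q)"
        by (rule nn_integral_multc) simp
      also have "(\<integral>\<^sup>+t. ennreal (t powr (q*c - 1) * (u-t) powr (q-1)) * indicator {0<..<u} t \<partial>lborel)
          = ennreal (u powr (q*c + q - 1) * Beta (q*c) q)"
        using nn_integral_Beta[OF qc qpos True] .
      also have "u powr (q*c + q - 1) = u powr (q*a - 1)" by (simp add: c_def algebra_simps)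
      also have "Beta (q*c) q = Beta q (q*c)" by (rule Beta_commute)
      also have "ennreal (u powr (q*a - 1) * Beta q (q*c)) * (ennreal q * enn_powr (g u) q)
          = ennreal (q * Beta q (q*c)) * (enn_powr (g u) q * ennreal (u powr (q*a - 1)))"
      proof -
        have "0 \<le> Beta q (q*c)" using Beta_pos'[OF qpos qc] by simp
        then show ?thesis using qpos by (simp add: ennreal_mult mult_ac)
      qed
      finally show ?thesis using True by simp
    qed simp
  qed
  also have "\<dots> = ennreal (q * Beta q (q*c)) * SS" unfolding SS_def by (subst nn_integral_cmult) auto
  finally show ?thesis .
qed

lemma B_ineq:
  assumes "1 \<le> q" shows "TT \<le> ennreal (c powr (-q)) * SS"
proof -
  have "TT \<le> (\<integral>\<^sup>+t. G t * ennreal (W t powr (q-1)) * ennreal (t powr (q*c - 1)) * indicator {0<..} t \<partial>lborel)"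
    unfolding TT_def
  proof (intro nn_integral_mono)
    fix t show "enn_powr (H t) q * ennreal (t powr (q*c - 1)) * indicator {0<..} t
      \<le> G t * ennreal (W t powr (q-1)) * ennreal (t powr (q*c - 1)) * indicator {0<..} t"
      using HH_ge1[OF assms, of t] by (cases "0 < t") (auto intro: mult_right_mono)
  qed
  then show ?thesis using tonelli_HH by simp
qed

lemma D_ineq:
  assumes "q \<le> 1" shows "ennreal (c powr (-q)) * SS \<le> TT"
proof -
  have "(\<integral>\<^sup>+t. G t * ennreal (W t powr (q-1)) * ennreal (t powr (q*c - 1)) * indicator {0<..} t \<partial>lborel) \<le> TT"
    unfolding TT_def
  proof (intro nn_integral_mono)
    fix t show "G t * ennreal (W t powr (q-1)) * ennreal (t powr (q*c - 1)) * indicator {0<..} t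
      \<le> enn_powr (H t) q * ennreal (t powr (q*c - 1)) * indicator {0<..} t"
      using HH_le1[OF assms, of t] by (cases "0 < t") (auto intro: mult_right_mono)
  qed
  then show ?thesis using tonelli_HH by simp
qed

lemma inf_case:
  assumes t0: "0 < t0" "g t0 = \<infinity>"
  shows "SS = \<infinity>" "TT = \<infinity>"
proof -
  have ginf: "g t = \<infinity>" if "t \<le> t0" for t
  proof -
    have "g t0 \<le> g t" using anti that unfolding antimono_def by blast
    then show ?thesis using t0 by (simp add: top_unique)
  qed
  have "(\<integral>\<^sup>+u. \<infinity> * indicator {0<..<t0} u \<partial>lborel) \<le> SS"
    unfolding SS_def
  proof (intro nn_integral_mono)
    fix u show "\<infinity> * indicator {0<..<t0} u \<le> enn_powr (g u) q * ennreal (u powr (q*a - 1)) * indicator {0<..} u"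
    proof (cases "0 < u \<and> u < t0")
      case True
      then have "ennreal (u powr (q*a - 1)) \<noteq> 0" by simp
      then show ?thesis using True ginf[of u] by (simp add: ennreal_top_mult)
    qed (auto simp: indicator_def)
  qed
  moreover have "(\<integral>\<^sup>+u. \<infinity> * indicator {0<..<t0} u \<partial>lborel) = \<infinity>"
    using t0 by (subst nn_integral_cmult_indicator) (auto simp: ennreal_top_mult)
  ultimately show "SS = \<infinity>" by (simp add: top_unique)
  have Hinf: "H t = \<infinity>" if "0 < t" "t < t0" for t
  proof -
    have "(\<integral>\<^sup>+u. \<infinity> * indicator {t<..<t0} u \<partial>lborel) \<le> H t"
      unfolding H_def
      by (intro nn_integral_mono) (auto simp: indicator_def ginf)
    moreover have "(\<integral>\<^sup>+u. \<infinity> * indicator {t<..<t0} u \<partial>lborel) = \<infinity>"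
      using that by (subst nn_integral_cmult_indicator) (auto simp: ennreal_top_mult)
    ultimately show ?thesis by (simp add: top_unique)
  qed
  have "(\<integral>\<^sup>+u. \<infinity> * indicator {0<..<t0} u \<partial>lborel) \<le> TT"
    unfolding TT_def
  proof (intro nn_integral_mono)
    fix u show "\<infinity> * indicator {0<..<t0} u \<le> enn_powr (H u) q * ennreal (u powr (q*c - 1)) * indicator {0<..} u"
    proof (cases "0 < u \<and> u < t0")
      case True
      then have "ennreal (u powr (q*c - 1)) \<noteq> 0" by simp
      then show ?thesis using True Hinf[of u] by (simp add: ennreal_top_mult)
    qed (auto simp: indicator_def)
  qed
  moreover have "(\<integral>\<^sup>+u. \<infinity> * indicator {0<..<t0} u \<partial>lborel) = \<infinity>"
    using t0 by (subst nn_integral_cmult_indicator) (auto simp: ennreal_top_mult)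
  ultimately show "TT = \<infinity>" by (simp add: top_unique)
qed

lemma A_ineq:
  assumes q1: "1 \<le> q" shows "ennreal (q * Beta q (q*c)) * SS \<le> TT"
proof (cases "\<exists>t0>0. g t0 = \<infinity>")
  case True
  then obtain t0 where "0 < t0" "g t0 = \<infinity>" by auto
  then show ?thesis using inf_case by simp
next
  case False
  then have fin: "\<And>u. 0 < u \<Longrightarrow> g u \<noteq> \<infinity>" by auto
  have "(\<integral>\<^sup>+t. RR t * ennreal (t powr (q*c - 1)) * indicator {0<..} t \<partial>lborel) \<le> TT"
    unfolding TT_def
  proof (intro nn_integral_mono)
    fix t show "RR t * ennreal (t powr (q*c - 1)) * indicator {0<..} t \<le> enn_powr (H t) q * ennreal (t powr (q*c - 1)) * indicator {0<..} t"
    proof (cases "0 < t")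
      case True
      have gs: "gsetup g t" by unfold_locales (use anti fin True in auto)
      have "RR t \<le> enn_powr (H t) q"
        using gsetup.P_g_ge1[OF gs q1] gsetup.R_def[OF gs, of q] gsetup.H_def[OF gs] by (simp add: RR_def H_def)
      then show ?thesis by (intro mult_right_mono) auto
    qed simp
  qed
  then show ?thesis using tonelli_Beta by simp
qed

lemma C_ineq:
  assumes q1: "q \<le> 1" shows "TT \<le> ennreal (q * Beta q (q*c)) * SS"
proof (cases "\<exists>t0>0. g t0 = \<infinity>")
  case True
  then obtain t0 where "0 < t0" "g t0 = \<infinity>" by auto
  moreover have "0 < Beta q (q*c)" using qpos cpos by (simp add: Beta_pos')
  ultimately show ?thesis using inf_case qpos by (simp add: ennreal_mult_top)
next
  case False
  then have fin: "\<And>u. 0 < u \<Longrightarrow> g u \<noteq> \<infinity>" by auto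
  have "TT \<le> (\<integral>\<^sup>+t. RR t * ennreal (t powr (q*c - 1)) * indicator {0<..} t \<partial>lborel)"
    unfolding TT_def
  proof (intro nn_integral_mono)
    fix t show "enn_powr (H t) q * ennreal (t powr (q*c - 1)) * indicator {0<..} t \<le> RR t * ennreal (t powr (q*c - 1)) * indicator {0<..} t"
    proof (cases "0 < t")
      case True
      have gs: "gsetup g t" by unfold_locales (use anti fin True in auto)
      have "enn_powr (H t) q \<le> RR t"
        using gsetup.P_g_le1[OF gs qpos q1] gsetup.R_def[OF gs, of q] gsetup.H_def[OF gs] by (simp add: RR_def H_def)
      then show ?thesis by (intro mult_right_mono) auto
    qed simp
  qed
  then show ?thesis using tonelli_Beta by simp
qed

end



lemma rearr_antimono: "antimono (rearr M f)"
proof (rule antimonoI)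
  fix x y :: real assume "x \<le> y"
  then have "{s. emeasure M {x \<in> space M. s < ennreal \<bar>f x\<bar>} \<le> ennreal x}
      \<subseteq> {s. emeasure M {x \<in> space M. s < ennreal \<bar>f x\<bar>} \<le> ennreal y}"
    by (auto intro: order.trans ennreal_leI)
  then show "rearr M f y \<le> rearr M f x" unfolding rearr_def by (rule Inf_superset_mono)
qed

lemma pconj_eq: assumes "0 < p" "p < 1" shows "- q / pconj p = q * (1/p - 1)" "- pconj p = 1 / (1/p - 1)"
  using assms by (auto simp: pconj_def field_simps)

lemma star_eq:
  assumes "0 < p" "p < 1" "0 < q"
  shows "lorentz_star M f p q = enn_powr (core.SS (rearr M f) q (1/p)) (1/q)"
proof -
  interpret core "rearr M f" q "1/p"
    by unfold_locales (use rearr_antimono assms in auto)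
  have "(\<integral>\<^sup>+ t \<in> {0<..}. enn_powr (rearr M f t * ennreal (t powr (1/p))) q * ennreal (1/t) \<partial>lborel)
      = SS"
    unfolding SS_def
  proof (intro nn_integral_cong)
    fix t
    show "enn_powr (rearr M f t * ennreal (t powr (1/p))) q * ennreal (1/t) * indicator {0<..} t
      = enn_powr (rearr M f t) q * ennreal (t powr (q * (1/p) - 1)) * indicator {0<..} t"
    proof (cases "0 < t")
      case True
      have "(t powr (1/p)) powr q * (1/t) = t powr (q * (1/p) - 1)"
        using True by (simp add: powr_powr powr_diff mult.commute)
      then show ?thesis using True assms
        by (simp add: enn_powr_mult mult.assoc ennreal_mult[symmetric] del: ennreal_mult)
    qed simp
  qed
  then show ?thesis unfolding lorentz_star_def by simp
qed

lemma sstar_eq: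
  assumes "0 < p" "p < 1" "0 < q"
  shows "lorentz_sstar M f p q = enn_powr (core.TT (rearr M f) q (1/p)) (1/q)"
proof -
  interpret core "rearr M f" q "1/p"
    by unfold_locales (use rearr_antimono assms in auto)
  have "(\<integral>\<^sup>+ t \<in> {0<..}. enn_powr (\<integral>\<^sup>+ u \<in> {t<..}. rearr M f u \<partial>lborel) q
                                 * ennreal (t powr (- q / pconj p)) * ennreal (1/t) \<partial>lborel)
      = TT"
    unfolding TT_def H_def c_def
  proof (intro nn_integral_cong)
    fix t
    show "enn_powr (\<integral>\<^sup>+ u \<in> {t<..}. rearr M f u \<partial>lborel) q * ennreal (t powr (- q / pconj p)) * ennreal (1/t) * indicator {0<..} t
      = enn_powr (\<integral>\<^sup>+ u. rearr M f u * indicator {t<..} u \<partial>lborel) q * ennreal (t powr (q * (1/p - 1) - 1)) * indicator {0<..} t"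
    proof (cases "0 < t")
      case True
      have "t powr (- q / pconj p) * (1/t) = t powr (q * (1/p - 1) - 1)"
        using True pconj_eq[OF assms(1,2)] by (simp add: powr_diff)
      then show ?thesis using True assms
        by (simp add: mult.assoc ennreal_mult[symmetric] del: ennreal_mult)
    qed simp
  qed
  then show ?thesis unfolding lorentz_sstar_def by simp
qed

lemma part1:
  fixes p q :: real
  assumes p: "0 < p" "p < 1" and q: "0 < q"
  shows "(1 \<le> q \<longrightarrow>
           ennreal ((q * Beta q (- q / pconj p)) powr (1/q)) * lorentz_star M f p q \<le> lorentz_sstar M f p q
         \<and> lorentz_sstar M f p q \<le> ennreal (- pconj p) * lorentz_star M f p q)
      \<and> (q \<le> 1 \<longrightarrow>
           lorentz_sstar M f p q \<le> ennreal ((q * Beta q (- q / pconj p)) powr (1/q)) * lorentz_star M f p q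
         \<and> ennreal (- pconj p) * lorentz_star M f p q \<le> lorentz_sstar M f p q)"
proof -
  interpret core "rearr M f" q "1/p"
    by unfold_locales (use rearr_antimono p q in auto)
  have cc: "c = 1/p - 1" by (simp add: c_def)
  have beq: "- q / pconj p = q * c" using pconj_eq[OF p] cc by simp
  have peq: "- pconj p = (c powr (-q)) powr (1/q)"
  proof -
    have "(c powr (-q)) powr (1/q) = c powr (-q * (1/q))" by (rule powr_powr)
    also have "-q * (1/q) = -1" using q by simp
    also have "c powr (-1) = 1/c" using cpos by (simp add: powr_minus_divide)
    finally show ?thesis using pconj_eq[OF p] cc by simp
  qed
  have K0: "0 \<le> q * Beta q (q*c)" using q cpos by (simp add: Beta_pos' less_imp_le)
  have st: "lorentz_star M f p q = enn_powr SS (1/q)" by (rule star_eq[OF p q])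
  have sst: "lorentz_sstar M f p q = enn_powr TT (1/q)" by (rule sstar_eq[OF p q])
  have q1: "0 < 1/q" using q by simp
  have e1: "ennreal ((q * Beta q (- q / pconj p)) powr (1/q)) * lorentz_star M f p q
      = enn_powr (ennreal (q * Beta q (q*c)) * SS) (1/q)"
    unfolding st beq by (simp add: enn_powr_ennreal_mult[OF q1 K0])
  have e2: "ennreal (- pconj p) * lorentz_star M f p q = enn_powr (ennreal (c powr (-q)) * SS) (1/q)"
    unfolding st peq by (simp add: enn_powr_ennreal_mult[OF q1])
  show ?thesis
    unfolding e1 e2 sst
    using A_ineq B_ineq C_ineq D_ineq q1
    by (auto intro: enn_powr_mono)
qed



lemma rearr_lborel:
  fixes f :: "real \<Rightarrow> real"
  assumes meas[measurable]: "f \<in> borel_measurable borel"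
    and zero: "\<And>x. x \<le> 0 \<Longrightarrow> f x = 0"
    and nn: "\<And>x. 0 \<le> f x"
    and anti: "\<And>x y. 0 < x \<Longrightarrow> x \<le> y \<Longrightarrow> f y \<le> f x"
    and rc: "\<And>t s. 0 < t \<Longrightarrow> s < f t \<Longrightarrow> \<exists>t'>t. s < f t'"
    and t: "0 < t"
  shows "rearr lborel f t = ennreal (f t)"
proof -
  define P where "P s = (emeasure lborel {x \<in> space lborel. s < ennreal \<bar>f x\<bar>} \<le> ennreal t)" for s
  have P1: "P (ennreal (f t))"
  proof -
    have "{x \<in> space lborel. ennreal (f t) < ennreal \<bar>f x\<bar>} \<subseteq> {0<..<t}"
    proof
      fix x assume "x \<in> {x \<in> space lborel. ennreal (f t) < ennreal \<bar>f x\<bar>}"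
      then have lt: "f t < f x" using nn[of x] nn[of t] by (simp add: ennreal_less_iff)
      have "0 < x" using lt zero[of x] nn[of t] by (cases "x \<le> 0") auto
      moreover have "x < t" using lt anti[of t x] t by (cases "t \<le> x") auto
      ultimately show "x \<in> {0<..<t}" by simp
    qed
    then have "emeasure lborel {x \<in> space lborel. ennreal (f t) < ennreal \<bar>f x\<bar>} \<le> emeasure lborel {0<..<t}"
      by (intro emeasure_mono) auto
    then show ?thesis using t by (simp add: P_def)
  qed
  have P2: "ennreal (f t) \<le> s" if "P s" for s
  proof (rule ccontr)
    assume "\<not> ennreal (f t) \<le> s"
    then have "s < ennreal (f t)" by simp
    then obtain s' where s': "s = ennreal s'" "0 \<le> s'" "s' < f t"
      by (cases s rule: ennreal_cases) (auto simp: ennreal_less_iff)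
    obtain t' where t': "t < t'" "s' < f t'" using rc[OF t s'(3)] by auto
    have "{0<..t'} \<subseteq> {x \<in> space lborel. s < ennreal \<bar>f x\<bar>}"
    proof
      fix x assume x: "x \<in> {0<..t'}"
      then have "f t' \<le> f x" using anti by auto
      then have "s' < \<bar>f x\<bar>" using t' nn[of x] by simp
      then show "x \<in> {x \<in> space lborel. s < ennreal \<bar>f x\<bar>}" using s' by (simp add: ennreal_less_iff)
    qed
    then have "emeasure lborel {0<..t'} \<le> emeasure lborel {x \<in> space lborel. s < ennreal \<bar>f x\<bar>}"
      by (intro emeasure_mono) auto
    moreover have "emeasure lborel {0<..t'} = ennreal t'" using t t' by simp
    ultimately have "ennreal t' \<le> ennreal t" using that unfolding P_def by (metis order.trans)
    then show False using t t' by (simp add: ennreal_le_iff)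
  qed
  have "rearr lborel f t = Inf {s. P s}" unfolding rearr_def P_def by simp
  also have "\<dots> = ennreal (f t)"
    by (rule antisym) (auto intro: Inf_lower Inf_greatest P1 P2)
  finally show ?thesis .
qed



definition f1 :: "real \<Rightarrow> real" where "f1 = indicator {0<..<1}"

lemma enn_powr_one[simp]: "enn_powr 1 a = 1"
  using enn_powr_ennreal[of 1 a] by simp

lemma rearr_f1: assumes "0 < t" shows "rearr lborel f1 t = ennreal (indicator {0<..<1} t)"
proof -
  have "rearr lborel f1 t = ennreal (f1 t)"
  proof (rule rearr_lborel[OF _ _ _ _ _ assms], unfold f1_def)
  fix t s :: real assume t: "0 < t" and s: "s < indicator {0<..<1} t"
  show "\<exists>t'>t. s < indicator {0<..<1} t'"
  proof (cases "t < 1")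
    case True
    then show ?thesis using s t by (intro exI[of _ "(t+1)/2"]) (auto simp: indicator_def)
  next
    case False
    then show ?thesis using s t by (intro exI[of _ "t+1"]) (auto simp: indicator_def)
  qed
  qed (auto simp: indicator_def)
  then show ?thesis by (simp add: f1_def)
qed

lemma f1_vals:
  assumes p: "0 < p" "p < 1" and q: "0 < q"
  shows "core.SS (rearr lborel f1) q (1/p) = ennreal (1 / (q * (1/p)))"
    "core.TT (rearr lborel f1) q (1/p) = ennreal (q * Beta q (q * (1/p - 1))) * core.SS (rearr lborel f1) q (1/p)"
proof -
  interpret core "rearr lborel f1" q "1/p"
    by unfold_locales (use rearr_antimono p q in auto)
  have qa: "0 < q * (1/p)" using p q by simp
  show S: "SS = ennreal (1 / (q * (1/p)))"
  proof -
    have "SS = (\<integral>\<^sup>+t. ennreal (t powr (q * (1/p) - 1)) * indicator {0<..<1} t \<partial>lborel)"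
      unfolding SS_def
      by (intro nn_integral_cong) (auto simp: rearr_f1 indicator_def q)
    also have "\<dots> = ennreal (1 powr (q * (1/p) - 1 + 1) / (q * (1/p) - 1 + 1))"
      by (rule nn_integral_powr_0) (use qa in auto)
    finally show ?thesis by simp
  qed
  have H1: "H t = ennreal (1 - t) * indicator {0<..<1} t" if "0 < t" for t
  proof (cases "t < 1")
    case True
    have "H t = (\<integral>\<^sup>+u. 1 * indicator {t<..<1} u \<partial>lborel)"
      unfolding H_def using that
      by (intro nn_integral_cong) (auto simp: rearr_f1 indicator_def)
    also have "\<dots> = ennreal (1 - t)" using True by (subst nn_integral_cmult_indicator) auto
    finally show ?thesis using True that by simp
  next
    case False
    have "(\<lambda>u. rearr lborel f1 u * indicator {t<..} u) = (\<lambda>u. 0)"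
      using that False by (auto simp: rearr_f1 indicator_def fun_eq_iff)
    then have "H t = 0" unfolding H_def by (simp only:) simp
    then show ?thesis using False by simp
  qed
  have qc: "0 < q * c" using q cpos by simp
  have "TT = (\<integral>\<^sup>+t. ennreal (t powr (q*c - 1) * (1 - t) powr ((q + 1) - 1)) * indicator {0<..<1} t \<partial>lborel)"
    unfolding TT_def
  proof (intro nn_integral_cong)
    fix t
    show "enn_powr (H t) q * ennreal (t powr (q * c - 1)) * indicator {0<..} t =
         ennreal (t powr (q * c - 1) * (1 - t) powr (q + 1 - 1)) * indicator {0<..<1} t"
    proof (cases "0 < t \<and> t < 1")
      case True
      then show ?thesis using H1[of t] by (simp add: ennreal_mult mult.commute)
    next
      case False
      then consider "t \<le> 0" | "1 \<le> t" by linarith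
      then show ?thesis
      proof cases
        case 2 then show ?thesis using H1[of t] q by (simp add: indicator_def)
      qed simp
    qed
  qed
  also have "\<dots> = ennreal (1 powr (q*c + (q+1) - 1) * Beta (q*c) (q+1))"
    by (rule nn_integral_Beta) (use qc q in auto)
  also have "Beta (q*c) (q+1) = q * Beta q (q*c) * (1 / (q * (1/p)))"
  proof -
    have "(q + q*c) * Beta (q + 1) (q*c) = q * Beta q (q*c)"
      by (rule Beta_plus1_left) (use q in \<open>auto elim!: nonpos_Ints_cases\<close>)
    moreover have "q + q*c = q * (1/p)" by (simp add: c_def algebra_simps)
    ultimately have "(q * (1/p)) * Beta (q + 1) (q*c) = q * Beta q (q*c)" by simp
    then have e: "(q * (1/p)) * Beta (q + 1) (q*c) = q * Beta q (q*c)" .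
    have "Beta (q + 1) (q*c) = (p / q) * ((q * (1/p)) * Beta (q + 1) (q*c))"
      using p q by (simp add: field_simps)
    also have "\<dots> = (p / q) * (q * Beta q (q*c))" by (simp only: e)
    also have "\<dots> = p * Beta q (q*c)" using q by simp
    finally have "Beta (q*c) (q + 1) = p * Beta q (q*c)" by (simp add: Beta_commute)
    moreover have "q * Beta q (q*c) * (1 / (q * (1/p))) = p * Beta q (q*c)" using p q by simp
    ultimately show ?thesis by simp
  qed
  finally have T: "TT = ennreal (q * Beta q (q*c) * (1 / (q * (1/p))))" by simp
  have "ennreal (q * Beta q (q*c)) * ennreal (1 / (q * (1/p))) = ennreal (q * Beta q (q*c) * (1 / (q * (1/p))))"
    by (rule ennreal_mult[symmetric]) (use Beta_pos'[OF q qc] q qa p in auto)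
  then show "TT = ennreal (q * Beta q (q * (1/p - 1))) * SS"
    unfolding S T by (simp add: c_def)
qed



definition fb :: "real \<Rightarrow> real \<Rightarrow> real" where
  "fb b x = (if x \<le> 0 then 0 else min 1 (x powr (-b)))"

lemma fb_meas[measurable]: "fb b \<in> borel_measurable borel"
  unfolding fb_def by measurable

lemma fb_pos_eq: "0 < x \<Longrightarrow> fb b x = min 1 (x powr (-b))" by (simp add: fb_def)

lemma fb_lt1: "0 < b \<Longrightarrow> 0 < x \<Longrightarrow> x < 1 \<Longrightarrow> fb b x = 1"
proof -
  assume "0 < b" "0 < x" "x < 1"
  have "x powr b < 1 powr b" using \<open>0 < b\<close> \<open>0 < x\<close> \<open>x < 1\<close> by (intro powr_less_mono2) auto
  then have xb: "x powr b < 1" by simp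
  have "x powr (-b) = 1 / x powr b" by (simp add: powr_minus_divide)
  moreover have "0 < x powr b" using \<open>0 < x\<close> by simp
  ultimately have "1 < x powr (-b)" using xb by simp
  then show ?thesis using \<open>0 < x\<close> by (simp add: fb_def)
qed

lemma fb_ge1: "0 < b \<Longrightarrow> 1 \<le> x \<Longrightarrow> fb b x = x powr (-b)"
proof -
  assume "0 < b" "1 \<le> x"
  then have "x powr (-b) \<le> 1" by (simp add: powr_le_one_le ge_one_powr_ge_zero powr_minus_divide)
  then show ?thesis using \<open>1 \<le> x\<close> by (simp add: fb_def)
qed

lemma rearr_fb:
  assumes b: "0 < b" and t: "0 < t"
  shows "rearr lborel (fb b) t = ennreal (fb b t)"
proof (rule rearr_lborel[OF fb_meas _ _ _ _ t])
  fix x :: real assume "x \<le> 0" then show "fb b x = 0" by (simp add: fb_def)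
next
  fix x show "0 \<le> fb b x" by (simp add: fb_def)
next
  fix x y :: real assume "0 < x" "x \<le> y"
  then have "y powr (-b) \<le> x powr (-b)" using b by (intro powr_mono2') auto
  then show "fb b y \<le> fb b x" using \<open>0 < x\<close> \<open>x \<le> y\<close> by (auto simp: fb_def)
next
  fix t s :: real assume t: "0 < t" and s: "s < fb b t"
  have "((\<lambda>x. min 1 (x powr (-b))) \<longlongrightarrow> min 1 (t powr (-b))) (at_right t)"
    using t by (intro tendsto_intros) auto
  then have "eventually (\<lambda>x. s < min 1 (x powr (-b))) (at_right t)"
    using s t by (intro order_tendstoD(1)) (auto simp: fb_def)
  then obtain b0 where "b0 > t" and hb: "\<And>y. t < y \<Longrightarrow> y < b0 \<Longrightarrow> s < min 1 (y powr (-b))"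
    unfolding eventually_at_right_field by auto
  have "s < min 1 (((t + b0)/2) powr (-b))" by (rule hb) (use \<open>b0 > t\<close> in auto)
  then show "\<exists>t'>t. s < fb b t'"
    using t \<open>b0 > t\<close> by (intro exI[of _ "(t + b0)/2"]) (auto simp: fb_def)
qed

lemma split_Ioi:
  fixes F :: "real \<Rightarrow> ennreal"
  assumes [measurable]: "F \<in> borel_measurable borel"
  shows "(\<integral>\<^sup>+t. F t * indicator {0<..} t \<partial>lborel)
    = (\<integral>\<^sup>+t. F t * indicator {0<..<1} t \<partial>lborel) + (\<integral>\<^sup>+t. F t * indicator {1<..} t \<partial>lborel)"
proof -
  have "(\<integral>\<^sup>+t. F t * indicator {0<..} t \<partial>lborel) = (\<integral>\<^sup>+t. F t * indicator ({0<..<1} \<union> {1<..}) t \<partial>lborel)"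
    by (rule nn_integral_indicator_AE_eq[of 1 1]) (auto simp: indicator_def)
  also have "\<dots> = (\<integral>\<^sup>+t. F t * indicator {0<..<1} t + F t * indicator {1<..} t \<partial>lborel)"
    by (intro nn_integral_cong) (auto simp: indicator_def)
  also have "\<dots> = (\<integral>\<^sup>+t. F t * indicator {0<..<1} t \<partial>lborel) + (\<integral>\<^sup>+t. F t * indicator {1<..} t \<partial>lborel)"
    by (rule nn_integral_add) auto
  finally show ?thesis .
qed

locale fbsetup =
  fixes b q a :: real
  assumes qpos: "0 < q" and agt: "1 < a" and ba: "a < b"
begin

sublocale core "rearr lborel (fb b)" q a
  by unfold_locales (use rearr_antimono qpos agt in auto)

lemma bpos: "0 < b" using agt ba by simp
lemma b1: "1 < b" using agt ba by simp

lemma g_eq: "0 < t \<Longrightarrow> rearr lborel (fb b) t = ennreal (fb b t)"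
  by (rule rearr_fb[OF bpos])

lemma SS_fb: "SS = ennreal (1/(q*a) + 1/(q*(b-a)))"
proof -
  have "SS = (\<integral>\<^sup>+t. enn_powr (rearr lborel (fb b) t) q * ennreal (t powr (q*a - 1)) * indicator {0<..<1} t \<partial>lborel)
    + (\<integral>\<^sup>+t. enn_powr (rearr lborel (fb b) t) q * ennreal (t powr (q*a - 1)) * indicator {1<..} t \<partial>lborel)"
    unfolding SS_def by (rule split_Ioi) simp
  also have "(\<integral>\<^sup>+t. enn_powr (rearr lborel (fb b) t) q * ennreal (t powr (q*a - 1)) * indicator {0<..<1} t \<partial>lborel)
      = (\<integral>\<^sup>+t. ennreal (t powr (q*a - 1)) * indicator {0<..<1} t \<partial>lborel)"
    by (intro nn_integral_cong) (auto simp: indicator_def g_eq fb_lt1 bpos)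
  also have "\<dots> = ennreal (1 powr (q*a - 1 + 1) / (q*a - 1 + 1))"
    by (rule nn_integral_powr_0) (use qpos agt in auto)
  also have "(\<integral>\<^sup>+t. enn_powr (rearr lborel (fb b) t) q * ennreal (t powr (q*a - 1)) * indicator {1<..} t \<partial>lborel)
      = (\<integral>\<^sup>+t. ennreal (t powr (q*(a-b) - 1)) * indicator {1<..} t \<partial>lborel)"
  proof (intro nn_integral_cong)
    fix t show "enn_powr (rearr lborel (fb b) t) q * ennreal (t powr (q*a - 1)) * indicator {1<..} t
        = ennreal (t powr (q*(a-b) - 1)) * indicator {1<..} t"
    proof (cases "1 < t")
      case True
      then have "(t powr (-b)) powr q * t powr (q*a - 1) = t powr (q*(a-b) - 1)"
        by (simp add: powr_powr powr_add[symmetric] algebra_simps)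
      then show ?thesis using True g_eq[of t] fb_ge1[OF bpos, of t]
        by (simp add: ennreal_mult[symmetric] del: ennreal_mult)
    qed simp
  qed
  also have "\<dots> = ennreal (-(1 powr (q*(a-b) - 1 + 1)) / (q*(a-b) - 1 + 1))"
    by (rule nn_integral_powr_inf) (use qpos ba in \<open>auto simp: mult_pos_neg\<close>)
  also have "-(1 powr (q*(a-b) - 1 + 1)) / (q*(a-b) - 1 + 1) = 1/(q*(b-a))"
    using qpos ba by (simp add: field_simps)
  also have "1 powr (q*a - 1 + 1) / (q*a - 1 + 1) = 1/(q*a)" by simp
  finally have "SS = ennreal (1/(q*a)) + ennreal (1/(q*(b-a)))" .
  then show ?thesis using qpos agt ba by (simp add: ennreal_plus)
qed

lemma H_ge1: assumes "1 \<le> t" shows "H t = ennreal (t powr (1-b) / (b-1))"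
proof -
  have "H t = (\<integral>\<^sup>+u. ennreal (u powr (-b)) * indicator {t<..} u \<partial>lborel)"
    unfolding H_def using assms by (intro nn_integral_cong) (auto simp: indicator_def g_eq fb_ge1 bpos)
  also have "\<dots> = ennreal (-(t powr (-b+1)) / (-b+1))"
    by (rule nn_integral_powr_inf) (use b1 assms in auto)
  also have "-(t powr (-b+1)) / (-b+1) = t powr (1-b) / (b-1)"
    using b1 by (simp add: field_simps)
  finally show ?thesis .
qed

lemma H_le: assumes "0 < t" shows "H t \<le> ennreal (b/(b-1))"
proof -
  have "H t \<le> (\<integral>\<^sup>+u. ennreal (fb b u) * indicator {0<..} u \<partial>lborel)"
    unfolding H_def
  proof (intro nn_integral_mono)
    fix u show "rearr lborel (fb b) u * indicator {t<..} u \<le> ennreal (fb b u) * indicator {0<..} u"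
      using assms g_eq[of u] by (cases "t < u") (auto simp: indicator_def)
  qed
  also have "\<dots> = (\<integral>\<^sup>+u. ennreal (fb b u) * indicator {0<..<1} u \<partial>lborel) + (\<integral>\<^sup>+u. ennreal (fb b u) * indicator {1<..} u \<partial>lborel)"
    by (rule split_Ioi) simp
  also have "(\<integral>\<^sup>+u. ennreal (fb b u) * indicator {0<..<1} u \<partial>lborel) = 1"
  proof -
    have e: "(\<lambda>u. ennreal (fb b u) * indicator {0<..<1} u) = indicator {0<..<1}"
      by (auto simp: fun_eq_iff indicator_def fb_lt1 bpos)
    show ?thesis unfolding e by (subst nn_integral_indicator) auto
  qed
  also have "(\<integral>\<^sup>+u. ennreal (fb b u) * indicator {1<..} u \<partial>lborel) = (\<integral>\<^sup>+u. ennreal (u powr (-b)) * indicator {1<..} u \<partial>lborel)"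
    by (intro nn_integral_cong) (auto simp: indicator_def fb_ge1 bpos)
  also have "\<dots> = ennreal (-(1 powr (-b+1)) / (-b+1))"
    by (rule nn_integral_powr_inf) (use b1 in auto)
  also have "1 + ennreal (-(1 powr (-b+1)) / (-b+1)) = ennreal (b/(b-1))"
  proof -
    have "1 + -(1 powr (-b+1)) / (-b+1) = b/(b-1)" using b1 by (simp add: field_simps)
    moreover have "0 \<le> -(1 powr (-b+1)) / (-b+1)" using b1 by (simp add: divide_simps)
    ultimately show ?thesis by (metis ennreal_1 ennreal_plus zero_le_one)
  qed
  finally show ?thesis .
qed

lemma H_anti: "antimono H"
proof (rule antimonoI)
  fix x y :: real assume "x \<le> y"
  then show "H y \<le> H x" unfolding H_def
    by (intro nn_integral_mono mult_left_mono) (auto simp: indicator_def)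
qed

lemma H_meas[measurable]: "H \<in> borel_measurable borel"
  by (rule antimono_borel_measurable[OF H_anti])

definition Lb where "Lb = (b-1) powr (-q) / (q*(b-a))"
definition Ub where "Ub = (b/(b-1)) powr q / (q*c) + Lb"

lemma tail_int: "(\<integral>\<^sup>+t. enn_powr (H t) q * ennreal (t powr (q*c - 1)) * indicator {1..} t \<partial>lborel) = ennreal Lb"
proof -
  have "(\<integral>\<^sup>+t. enn_powr (H t) q * ennreal (t powr (q*c - 1)) * indicator {1..} t \<partial>lborel)
      = (\<integral>\<^sup>+t. ennreal ((b-1) powr (-q)) * (ennreal (t powr (q*(a-b) - 1)) * indicator {1..} t) \<partial>lborel)"
  proof (intro nn_integral_cong)
    fix t show "enn_powr (H t) q * ennreal (t powr (q*c - 1)) * indicator {1..} t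
       = ennreal ((b-1) powr (-q)) * (ennreal (t powr (q*(a-b) - 1)) * indicator {1..} t)"
    proof (cases "1 \<le> t")
      case True
      have "(t powr (1-b) / (b-1)) powr q * t powr (q*c - 1) = (b-1) powr (-q) * t powr (q*(a-b) - 1)"
      proof -
        have "(t powr (1-b) / (b-1)) powr q = t powr ((1-b)*q) / (b-1) powr q"
          using True b1 by (simp add: powr_divide powr_powr)
        then have "(t powr (1-b) / (b-1)) powr q * t powr (q*c - 1) = (1 / (b-1) powr q) * (t powr ((1-b)*q) * t powr (q*c - 1))"
          by simp
        also have "t powr ((1-b)*q) * t powr (q*c - 1) = t powr (q*(a-b) - 1)"
          using True by (simp add: powr_add[symmetric] c_def algebra_simps)
        also have "1 / (b-1) powr q = (b-1) powr (-q)" using b1 by (simp add: powr_minus_divide)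
        finally show ?thesis .
      qed
      then show ?thesis using True H_ge1[OF True] b1
        by (simp add: ennreal_mult[symmetric] mult.assoc del: ennreal_mult)
    qed simp
  qed
  also have "\<dots> = ennreal ((b-1) powr (-q)) * (\<integral>\<^sup>+t. ennreal (t powr (q*(a-b) - 1)) * indicator {1..} t \<partial>lborel)"
    by (rule nn_integral_cmult) simp
  also have "(\<integral>\<^sup>+t. ennreal (t powr (q*(a-b) - 1)) * indicator {1..} t \<partial>lborel)
      = (\<integral>\<^sup>+t. ennreal (t powr (q*(a-b) - 1)) * indicator {1<..} t \<partial>lborel)"
    by (rule nn_integral_indicator_AE_eq[of 1 1]) (auto simp: indicator_def)
  also have "\<dots> = ennreal (-(1 powr (q*(a-b) - 1 + 1)) / (q*(a-b) - 1 + 1))"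
    by (rule nn_integral_powr_inf) (use qpos ba in \<open>auto simp: mult_pos_neg\<close>)
  also have "ennreal ((b-1) powr (-q)) * \<dots> = ennreal Lb"
  proof -
    have "-(1 powr (q*(a-b) - 1 + 1)) / (q*(a-b) - 1 + 1) = 1 / (q*(b-a))"
      using qpos ba by (simp add: field_simps)
    moreover have "0 \<le> 1 / (q*(b-a))" using qpos ba by simp
    ultimately show ?thesis unfolding Lb_def by (simp add: ennreal_mult[symmetric] del: ennreal_mult)
  qed
  finally show ?thesis .
qed

lemma TT_lower: "ennreal Lb \<le> TT"
  unfolding TT_def tail_int[symmetric]
  by (intro nn_integral_mono mult_left_mono) (auto simp: indicator_def)

lemma TT_upper: "TT \<le> ennreal Ub"
proof -
  have "TT \<le> (\<integral>\<^sup>+t. ennreal ((b/(b-1)) powr q) * (ennreal (t powr (q*c - 1)) * indicator {0<..<1} t)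
       + enn_powr (H t) q * ennreal (t powr (q*c - 1)) * indicator {1..} t \<partial>lborel)"
    unfolding TT_def
  proof (intro nn_integral_mono)
    fix t show "enn_powr (H t) q * ennreal (t powr (q*c - 1)) * indicator {0<..} t
      \<le> ennreal ((b/(b-1)) powr q) * (ennreal (t powr (q*c - 1)) * indicator {0<..<1} t)
       + enn_powr (H t) q * ennreal (t powr (q*c - 1)) * indicator {1..} t"
    proof (cases "0 < t \<and> t < 1")
      case True
      have "enn_powr (H t) q \<le> enn_powr (ennreal (b/(b-1))) q"
        using H_le[of t] True qpos by (intro enn_powr_mono) auto
      then have "enn_powr (H t) q \<le> ennreal ((b/(b-1)) powr q)" using b1 by simp
      then show ?thesis using True by (auto simp: indicator_def intro: mult_right_mono)
    next
      case False
      then consider "t \<le> 0" | "1 \<le> t" by linarith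
      then show ?thesis by cases (auto simp: indicator_def)
    qed
  qed
  also have "\<dots> = ennreal ((b/(b-1)) powr q) * (\<integral>\<^sup>+t. ennreal (t powr (q*c - 1)) * indicator {0<..<1} t \<partial>lborel)
       + (\<integral>\<^sup>+t. enn_powr (H t) q * ennreal (t powr (q*c - 1)) * indicator {1..} t \<partial>lborel)"
    by (subst nn_integral_add) (auto simp: nn_integral_cmult)
  also have "(\<integral>\<^sup>+t. ennreal (t powr (q*c - 1)) * indicator {0<..<1} t \<partial>lborel) = ennreal (1 powr (q*c - 1 + 1) / (q*c - 1 + 1))"
    by (rule nn_integral_powr_0) (use qpos cpos in auto)
  also have "(\<integral>\<^sup>+t. enn_powr (H t) q * ennreal (t powr (q*c - 1)) * indicator {1..} t \<partial>lborel) = ennreal Lb"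
    by (rule tail_int)
  also have "ennreal ((b/(b-1)) powr q) * ennreal (1 powr (q*c - 1 + 1) / (q*c - 1 + 1)) + ennreal Lb = ennreal Ub"
  proof -
    have "0 \<le> Lb" unfolding Lb_def using qpos ba by simp
    moreover have "0 \<le> 1 / (q*c)" using qpos cpos by simp
    ultimately show ?thesis unfolding Ub_def using qpos cpos
      by (simp add: ennreal_mult[symmetric] ennreal_plus[symmetric] del: ennreal_mult ennreal_plus)
  qed
  finally show ?thesis .
qed

end



lemma f1_meas: "f1 \<in> borel_measurable lborel"
  unfolding f1_def by simp

lemma fb_meas': "fb b \<in> borel_measurable lborel"
  using fb_meas[of b] by (simp add: measurable_lborel1)

lemma f1_norms:
  assumes p: "0 < p" "p < 1" and q: "0 < q"
  defines "K \<equiv> q * Beta q (- q / pconj p)" and "\<sigma> \<equiv> 1 / (q * (1/p))"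
  shows "lorentz_star lborel f1 p q = ennreal (\<sigma> powr (1/q))"
    "lorentz_sstar lborel f1 p q = ennreal (K powr (1/q) * \<sigma> powr (1/q))"
    "0 < \<sigma>" "0 < K"
proof -
  show s0: "0 < \<sigma>" using p q by (simp add: \<sigma>_def)
  have beq: "- q / pconj p = q * (1/p - 1)" using pconj_eq[OF p] by simp
  have c0: "0 < 1/p - 1" using p by simp
  have "0 < q * (1/p - 1)" using q c0 by simp
  then have "0 < Gamma q" "0 < Gamma (q * (1/p - 1))" "0 < Gamma (q + q * (1/p - 1))"
    using q by (auto intro!: Gamma_real_pos add_pos_pos)
  then have "0 < Beta q (q * (1/p - 1))" by (simp add: Beta_def)
  then show K0: "0 < K" unfolding K_def beq using q by simp
  show "lorentz_star lborel f1 p q = ennreal (\<sigma> powr (1/q))"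
    unfolding star_eq[OF p q] f1_vals(1)[OF p q] \<sigma>_def[symmetric] using s0 by simp
  have "lorentz_sstar lborel f1 p q = enn_powr (ennreal K * ennreal \<sigma>) (1/q)"
    unfolding sstar_eq[OF p q] f1_vals(2)[OF p q] f1_vals(1)[OF p q] \<sigma>_def[symmetric] K_def beq ..
  also have "\<dots> = enn_powr (ennreal (K * \<sigma>)) (1/q)" using s0 K0 by (simp add: ennreal_mult)
  also have "\<dots> = ennreal (K powr (1/q) * \<sigma> powr (1/q))" using s0 K0 by (simp add: powr_mult)
  finally show "lorentz_sstar lborel f1 p q = ennreal (K powr (1/q) * \<sigma> powr (1/q))" .
qed

lemma S1:
  assumes p: "0 < p" "p < 1" and q: "0 < q"
    and C: "C > (q * Beta q (- q / pconj p)) powr (1/q)"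
  shows "\<exists>f::real \<Rightarrow> real. f \<in> borel_measurable lborel \<and>
              lorentz_sstar lborel f p q < ennreal C * lorentz_star lborel f p q"
proof (intro exI conjI)
  show "f1 \<in> borel_measurable lborel" by (rule f1_meas)
  define K where "K = q * Beta q (- q / pconj p)"
  define \<sigma> where "\<sigma> = 1 / (q * (1/p))"
  note n = f1_norms[OF p q, folded K_def \<sigma>_def]
  have C0: "0 < C" using C by (metis powr_ge_zero le_less_trans)
  have "K powr (1/q) * \<sigma> powr (1/q) < C * \<sigma> powr (1/q)"
    using C n(3) unfolding K_def by (intro mult_strict_right_mono) auto
  then show "lorentz_sstar lborel f1 p q < ennreal C * lorentz_star lborel f1 p q"
    unfolding n(1,2) using C0 n(3) by (simp add: ennreal_mult[symmetric] ennreal_less_iff del: ennreal_mult)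
qed

lemma S3:
  assumes p: "0 < p" "p < 1" and q: "0 < q"
    and C: "C < (q * Beta q (- q / pconj p)) powr (1/q)"
  shows "\<exists>f::real \<Rightarrow> real. f \<in> borel_measurable lborel \<and>
              ennreal C * lorentz_star lborel f p q < lorentz_sstar lborel f p q"
proof (intro exI conjI)
  show "f1 \<in> borel_measurable lborel" by (rule f1_meas)
  define K where "K = q * Beta q (- q / pconj p)"
  define \<sigma> where "\<sigma> = 1 / (q * (1/p))"
  note n = f1_norms[OF p q, folded K_def \<sigma>_def]
  have pos: "0 < K powr (1/q) * \<sigma> powr (1/q)" using n(3,4) by simp
  show "ennreal C * lorentz_star lborel f1 p q < lorentz_sstar lborel f1 p q"
  proof (cases "C \<le> 0")
    case True
    then show ?thesis unfolding n(1,2) using pos by (simp add: ennreal_neg)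
  next
    case False
    have "C * \<sigma> powr (1/q) < K powr (1/q) * \<sigma> powr (1/q)"
      using C n(3) unfolding K_def by (intro mult_strict_right_mono) auto
    then show ?thesis
      unfolding n(1,2) using False n(3) pos by (simp add: ennreal_mult[symmetric] ennreal_less_iff del: ennreal_mult)
  qed
qed



lemma exists_right:
  fixes \<phi> :: "real \<Rightarrow> real"
  assumes "(\<phi> \<longlongrightarrow> \<phi> a) (at_right a)" "\<phi> a < y"
  shows "\<exists>b>a. \<phi> b < y"
proof -
  have "eventually (\<lambda>b. \<phi> b < y) (at_right a)" by (rule order_tendstoD(2)[OF assms])
  then obtain b0 where "b0 > a" and hb: "\<And>z. a < z \<Longrightarrow> z < b0 \<Longrightarrow> \<phi> z < y"
    unfolding eventually_at_right_field by auto
  have "\<phi> ((a + b0)/2) < y" by (rule hb) (use \<open>b0 > a\<close> in auto)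
  then show ?thesis using \<open>b0 > a\<close> by (intro exI[of _ "(a + b0)/2"]) auto
qed

lemma fb_norms:
  assumes p: "0 < p" "p < 1" and q: "0 < q" and b: "1/p < b"
  shows "lorentz_star lborel (fb b) p q = enn_powr (ennreal (1/(q*(1/p)) + 1/(q*(b-1/p)))) (1/q)"
    "lorentz_sstar lborel (fb b) p q = enn_powr (core.TT (rearr lborel (fb b)) q (1/p)) (1/q)"
    "ennreal (fbsetup.Lb b q (1/p)) \<le> core.TT (rearr lborel (fb b)) q (1/p)"
    "core.TT (rearr lborel (fb b)) q (1/p) \<le> ennreal (fbsetup.Ub b q (1/p))"
    "fbsetup.Lb b q (1/p) = (b-1) powr (-q) / (q*(b-1/p))"
    "fbsetup.Ub b q (1/p) = (b/(b-1)) powr q / (q*(1/p - 1)) + fbsetup.Lb b q (1/p)"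
proof -
  interpret fbsetup b q "1/p" by unfold_locales (use p q b in auto)
  show "lorentz_star lborel (fb b) p q = enn_powr (ennreal (1/(q*(1/p)) + 1/(q*(b-1/p)))) (1/q)"
  proof -
    have "lorentz_star lborel (fb b) p q = enn_powr SS (1/q)" by (rule star_eq[OF p q])
    then show ?thesis using SS_fb by simp
  qed
  show "lorentz_sstar lborel (fb b) p q = enn_powr TT (1/q)" by (rule sstar_eq[OF p q])
  show "ennreal Lb \<le> TT" by (rule TT_lower)
  show "TT \<le> ennreal Ub" by (rule TT_upper)
  show "Lb = (b-1) powr (-q) / (q*(b-1/p))" by (simp add: Lb_def)
  show "Ub = (b/(b-1)) powr q / (q*(1/p - 1)) + Lb" by (simp add: Ub_def c_def)
qed

lemma S2:
  assumes p: "0 < p" "p < 1" and q: "0 < q" and C: "C < - pconj p"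
  shows "\<exists>f::real \<Rightarrow> real. f \<in> borel_measurable lborel \<and>
              ennreal C * lorentz_star lborel f p q < lorentz_sstar lborel f p q"
proof -
  define a where "a = 1/p"
  define c where "c = a - 1"
  have a1: "1 < a" using p by (simp add: a_def)
  have c0: "0 < c" using a1 by (simp add: c_def)
  have Cc: "C < 1/c" using C pconj_eq(2)[OF p] by (simp add: c_def a_def)
  obtain b where b: "a < b" and key: "C \<le> 0 \<or> C powr q * b / a * (b-1) powr q < 1"
  proof (cases "C \<le> 0")
    case True then show ?thesis using that[of "a+1"] by simp
  next
    case False
    define \<phi> where "\<phi> b = C powr q * b / a * (b-1) powr q" for b
    have "(\<phi> \<longlongrightarrow> \<phi> a) (at_right a)"
      unfolding \<phi>_def using a1 by (intro tendsto_intros) auto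
    moreover have "\<phi> a < 1"
    proof -
      have "\<phi> a = (C * c) powr q" using a1 False by (simp add: \<phi>_def c_def powr_mult)
      moreover have "C * c < 1" using Cc c0 by (simp add: field_simps)
      moreover have "0 \<le> C * c" using False c0 by simp
      ultimately show ?thesis using q
        by (metis powr_less_mono2 powr_one_eq_one less_eq_real_def)
    qed
    ultimately obtain b where "a < b" "\<phi> b < 1" using exists_right by blast
    then show ?thesis using that[of b] by (simp add: \<phi>_def)
  qed
  have b': "1/p < b" using b by (simp add: a_def)
  note n = fb_norms[OF p q b', folded a_def]
  define S where "S = 1/(q*a) + 1/(q*(b-a))"
  define L where "L = (b-1) powr (-q) / (q*(b-a))"
  have L0: "0 < L" using b q a1 by (simp add: L_def)
  have S0: "0 < S" using b q a1 unfolding S_def by (intro add_pos_pos divide_pos_pos mult_pos_pos) auto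
  have T0: "0 < core.TT (rearr lborel (fb b)) q a"
  proof -
    have "0 < ennreal L" using L0 by simp
    also have "ennreal L \<le> core.TT (rearr lborel (fb b)) q a" using n(3) n(5) by (simp add: L_def)
    finally show ?thesis .
  qed
  show ?thesis
  proof (intro exI conjI)
    show "fb b \<in> borel_measurable lborel" by (rule fb_meas')
    show "ennreal C * lorentz_star lborel (fb b) p q < lorentz_sstar lborel (fb b) p q"
    proof (cases "C \<le> 0")
      case True
      then show ?thesis unfolding n(2) using T0 q by (simp add: ennreal_neg enn_powr_pos)
    next
      case False
      then have key': "C powr q * b / a * (b-1) powr q < 1" using key by simp
      have "C powr q * S < L"
      proof -
        define D where "D = q*(b-a)"
        have D0: "0 < D" using b q by (simp add: D_def)
        have e1: "C powr q * S * D = C powr q * b / a" using D0 a1 q unfolding S_def D_def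
          by (simp add: field_simps)
        have e2: "L * D = (b-1) powr (-q)" using D0 b q unfolding L_def D_def by (simp add: field_simps)
        have "C powr q * b / a < (b-1) powr (-q)"
        proof -
          have pb: "0 < (b-1) powr q" using b a1 by simp
          have "(C powr q * b / a) * (b-1) powr q < (b-1) powr (-q) * (b-1) powr q"
            using key' b a1 by (simp add: powr_add[symmetric])
          then show ?thesis using pb by (simp only: mult_less_cancel_right)
        qed
        then have "C powr q * S * D < L * D" using e1 e2 by simp
        then show ?thesis using D0 by simp
      qed
      then have "ennreal (C powr q * S) < ennreal L" using L0 by (intro ennreal_lessI) auto
      also have "ennreal L \<le> core.TT (rearr lborel (fb b)) q a" using n(3) n(5) by (simp add: L_def)
      finally have "ennreal (C powr q * S) < core.TT (rearr lborel (fb b)) q a" .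
      then have "enn_powr (ennreal (C powr q * S)) (1/q) < enn_powr (core.TT (rearr lborel (fb b)) q a) (1/q)"
        using q by (simp add: enn_powr_less_iff)
      moreover have "enn_powr (ennreal (C powr q * S)) (1/q) = ennreal C * lorentz_star lborel (fb b) p q"
      proof -
        have "enn_powr (ennreal (C powr q * S)) (1/q) = ennreal ((C powr q) powr (1/q)) * enn_powr (ennreal S) (1/q)"
          using q S0 by (simp add: ennreal_mult enn_powr_ennreal_mult)
        also have "(C powr q) powr (1/q) = C" using False q by (simp add: powr_powr)
        finally show ?thesis unfolding n(1) S_def by simp
      qed
      ultimately show ?thesis unfolding n(2) by simp
    qed
  qed
qed

lemma S4:
  assumes p: "0 < p" "p < 1" and q: "0 < q" and C: "C > - pconj p"
  shows "\<exists>f::real \<Rightarrow> real. f \<in> borel_measurable lborel \<and>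
              lorentz_sstar lborel f p q < ennreal C * lorentz_star lborel f p q"
proof -
  define a where "a = 1/p"
  define c where "c = a - 1"
  have a1: "1 < a" using p by (simp add: a_def)
  have c0: "0 < c" using a1 by (simp add: c_def)
  have Cc: "C > 1/c" using C pconj_eq(2)[OF p] by (simp add: c_def a_def)
  have C0: "0 < C" using Cc c0 by (meson less_trans zero_less_divide_1_iff)
  define \<psi> where "\<psi> b = (b/(b-1)) powr q * (b-a)/c + (b-1) powr (-q) - C powr q * b / a" for b
  have "(\<psi> \<longlongrightarrow> \<psi> a) (at_right a)"
    unfolding \<psi>_def using a1 c0 by (intro tendsto_intros) auto
  moreover have "\<psi> a < 0"
  proof -
    have "\<psi> a = c powr (-q) - C powr q" using a1 c0 by (simp add: \<psi>_def c_def)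
    moreover have "c powr (-q) < C powr q"
    proof -
      have "(1/c) powr q < C powr q" using Cc c0 q by (intro powr_less_mono2) auto
      then show ?thesis using c0 by (simp add: powr_minus_divide powr_divide)
    qed
    ultimately show ?thesis by simp
  qed
  ultimately obtain b where b: "a < b" and key: "\<psi> b < 0" using exists_right by blast
  have b': "1/p < b" using b by (simp add: a_def)
  note n = fb_norms[OF p q b', folded a_def]
  define S where "S = 1/(q*a) + 1/(q*(b-a))"
  define L where "L = (b-1) powr (-q) / (q*(b-a))"
  define U where "U = (b/(b-1)) powr q / (q*c) + L"
  have S0: "0 < S" using b q a1 unfolding S_def by (intro add_pos_pos divide_pos_pos mult_pos_pos) auto
  have U0: "0 \<le> U" using b q a1 c0 by (simp add: U_def L_def)
  have "U < C powr q * S"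
  proof -
    define D where "D = q*(b-a)"
    have D0: "0 < D" using b q by (simp add: D_def)
    have e1: "C powr q * S * D = C powr q * b / a" using D0 a1 q unfolding S_def D_def
      by (simp add: field_simps)
    have e2: "U * D = (b/(b-1)) powr q * (b-a)/c + (b-1) powr (-q)" using D0 c0 q unfolding U_def L_def D_def
      by (simp add: field_simps)
    have "U * D < C powr q * S * D" using key unfolding e1 e2 \<psi>_def by simp
    then show ?thesis using D0 by simp
  qed
  have TU: "core.TT (rearr lborel (fb b)) q a \<le> ennreal U"
    using n(4) unfolding n(6) n(5) U_def L_def c_def by simp
  show ?thesis
  proof (intro exI conjI)
    show "fb b \<in> borel_measurable lborel" by (rule fb_meas')
    have "lorentz_sstar lborel (fb b) p q \<le> enn_powr (ennreal U) (1/q)"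
      unfolding n(2) using TU q by (intro enn_powr_mono) auto
    also have "\<dots> < enn_powr (ennreal (C powr q * S)) (1/q)"
    proof -
      have "U powr (1/q) < (C powr q * S) powr (1/q)"
        using \<open>U < C powr q * S\<close> U0 q by (intro powr_less_mono2) auto
      moreover have "0 < (C powr q * S) powr (1/q)"
        using calculation by (meson le_less_trans powr_ge_zero)
      ultimately have "ennreal (U powr (1/q)) < ennreal ((C powr q * S) powr (1/q))"
        by (intro ennreal_lessI)
      moreover have "0 \<le> C powr q * S" using S0 by simp
      ultimately show ?thesis using U0 by simp
    qed
    also have "enn_powr (ennreal (C powr q * S)) (1/q) = ennreal C * lorentz_star lborel (fb b) p q"
    proof -
      have "enn_powr (ennreal (C powr q * S)) (1/q) = ennreal ((C powr q) powr (1/q)) * enn_powr (ennreal S) (1/q)"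
        using q S0 by (simp add: ennreal_mult enn_powr_ennreal_mult)
      also have "(C powr q) powr (1/q) = C" using C0 q by (simp add: powr_powr)
      finally show ?thesis unfolding n(1) S_def by simp
    qed
    finally show "lorentz_sstar lborel (fb b) p q < ennreal C * lorentz_star lborel (fb b) p q" .
  qed
qed


theorem mainTheorem12:
  fixes p q :: real
  assumes "0 < p" "p < 1" "0 < q"
  shows
    "(\<forall>(M::'a measure) (f::'a \<Rightarrow> real). f \<in> borel_measurable M \<longrightarrow>
        (1 \<le> q \<longrightarrow>
           ennreal ((q * Beta q (- q / pconj p)) powr (1/q)) * lorentz_star M f p q \<le> lorentz_sstar M f p q
         \<and> lorentz_sstar M f p q \<le> ennreal (- pconj p) * lorentz_star M f p q)
      \<and> (q \<le> 1 \<longrightarrow>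
           lorentz_sstar M f p q \<le> ennreal ((q * Beta q (- q / pconj p)) powr (1/q)) * lorentz_star M f p q
         \<and> ennreal (- pconj p) * lorentz_star M f p q \<le> lorentz_sstar M f p q))
   \<and> (1 \<le> q \<longrightarrow>
        (\<forall>C::real. C > (q * Beta q (- q / pconj p)) powr (1/q) \<longrightarrow>
           (\<exists>f::real \<Rightarrow> real. f \<in> borel_measurable lborel \<and>
              lorentz_sstar lborel f p q < ennreal C * lorentz_star lborel f p q))
      \<and> (\<forall>C::real. C < - pconj p \<longrightarrow>
           (\<exists>f::real \<Rightarrow> real. f \<in> borel_measurable lborel \<and>
              ennreal C * lorentz_star lborel f p q < lorentz_sstar lborel f p q)))
   \<and> (q \<le> 1 \<longrightarrow>
        (\<forall>C::real. C < (q * Beta q (- q / pconj p)) powr (1/q) \<longrightarrow>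
           (\<exists>f::real \<Rightarrow> real. f \<in> borel_measurable lborel \<and>
              ennreal C * lorentz_star lborel f p q < lorentz_sstar lborel f p q))
      \<and> (\<forall>C::real. C > - pconj p \<longrightarrow>
           (\<exists>f::real \<Rightarrow> real. f \<in> borel_measurable lborel \<and>
              lorentz_sstar lborel f p q < ennreal C * lorentz_star lborel f p q)))"
  using part1[OF assms] S1[OF assms] S2[OF assms] S3[OF assms] S4[OF assms] by blast

end
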